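(* Let $G=(V,E,p)$ be an influence graph with $V=\{1,\dots,n\}$ and let $(x_1,\dots,x_n)\in[0,1]^n$. For the Poisson process with rates $x_1,\dots,x_n$ described in the context, for every $t\in[0,1]$ and every fixed partial realization $\psi$ (that $\Psi(t)$ can take), $$\mathbb{E}\left[\frac{d f(\Psi(t))}{dt}\,\Big|\,\Psi(t)=\psi\right]\ge f^{+}(x_1,\dots,x_n)-\sigma(\Gamma(\psi)),$$ where the left side means $\lim_{dt\to 0^+}\frac{1}{dt}\mathbb{E}[f(\Psi(t+dt))-f(\Psi(t))\mid \Psi(t)=\psi]$.
   Context: IC model: each edge $(u,v)$ of $G$ has probability $p_{uv}\in[0,1]$; a realization (live-edge graph) $\phi$ contains each edge independently with probability $p_{uv}$, with distribution $\mathcal{P}$. $\Gamma(S,\phi)$ is the set of nodes reachable from $S$ in $\phi$ and $\sigma(S)=\mathbb{E}_{\Phi\sim\mathcal{P}}|\Gamma(S,\Phi)|$. Full-adoption feedback: selecting $u$ as a seed reveals the status of all out-going edges of every node reachable from $u$ in $\phi$. A partial realization $\psi$ records the seeds selected so far (the set ${\rm dom}(\psi)$) together with their feedback; $\Gamma(\psi)$ is the set of nodes reachable from ${\rm dom}(\psi)$ (determined by $\psi$) and $f(\psi)=|\Gamma(\psi)|$. An adaptive policy $\pi$ maps partial realizations to the next node to select; $V(\pi,\phi)$ is its seed set under $\phi$ and $\sigma(\pi)=\mathbb{E}_{\Phi\sim\mathcal{P}}|\Gamma(V(\pi,\Phi),\Phi)|$. Define $f^{+}(x_1,\dots,x_n)=\sup_\pi\{\sigma(\pi):\Pr_{\Phi\sim\mathcal{P}}[i\in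 V(\pi,\Phi)]=x_i\ \forall i\in[n]\}$. Poisson process: a realization $\phi\sim\mathcal{P}$ is drawn; there are $n$ independent Poisson clocks $C_1,\dots,C_n$, clock $C_i$ signalling at rate $x_i$; whenever $C_i$ signals, node $i$ is selected as a seed and its feedback under $\phi$ is observed. $\Psi(t)$ is the (random) partial realization at time $t$, with $\Psi(0)=\emptyset$. *)

theory Defs
  imports "HOL-Probability.Probability"
begin

type_synonym edge = "nat \<times> nat"

text \<open>Partial realization: the seed set dom(psi) together with the observed status of
  edges (Some True = live, Some False = blocked, None = not observed).\<close>
type_synonym partial_real = "nat set \<times> (edge \<Rightarrow> bool option)"

text \<open>A (deterministic) adaptive policy: maps a partial realization to the next seed,
  None meaning that the policy stops.\<close>
type_synonym policy = "partial_real \<Rightarrow> nat option"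

definition influence_graph :: "nat set \<Rightarrow> edge set \<Rightarrow> (edge \<Rightarrow> real) \<Rightarrow> bool" where
  "influence_graph V E p \<longleftrightarrow> finite V \<and> E \<subseteq> V \<times> V \<and> (\<forall>e\<in>E. 0 \<le> p e \<and> p e \<le> 1)"

definition realization_pmf :: "edge set \<Rightarrow> (edge \<Rightarrow> real) \<Rightarrow> edge set pmf" where
  "realization_pmf E p = map_pmf (\<lambda>b. {e\<in>E. b e}) (Pi_pmf E False (\<lambda>e. bernoulli_pmf (p e)))"

definition Gamma :: "nat set \<Rightarrow> edge set \<Rightarrow> nat set" where
  "Gamma S \<phi> = (\<phi>\<^sup>*) `` S"

definition psi_of :: "edge set \<Rightarrow> nat set \<Rightarrow> edge set \<Rightarrow> partial_real" where
  "psi_of E S \<phi> = (S, \<lambda>e. if e \<in> E \<and> fst e \<in> Gamma S \<phi> then Some (e \<in> \<phi>) else None)"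

definition Gamma_psi :: "partial_real \<Rightarrow> nat set" where
  "Gamma_psi \<psi> = ({e. snd \<psi> e = Some True}\<^sup>*) `` fst \<psi>"

definition f_psi :: "partial_real \<Rightarrow> real" where
  "f_psi \<psi> = real (card (Gamma_psi \<psi>))"

definition sigma_set :: "edge set \<Rightarrow> (edge \<Rightarrow> real) \<Rightarrow> nat set \<Rightarrow> real" where
  "sigma_set E p S = measure_pmf.expectation (realization_pmf E p) (\<lambda>\<phi>. real (card (Gamma S \<phi>)))"

definition valid_policy :: "nat set \<Rightarrow> policy \<Rightarrow> bool" where
  "valid_policy V \<pi> \<longleftrightarrow> (\<forall>\<psi>. \<pi> \<psi> = None \<or> (\<exists>v. \<pi> \<psi> = Some v \<and> v \<in> V \<and> v \<notin> fst \<psi>))"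

definition policy_step :: "edge set \<Rightarrow> policy \<Rightarrow> edge set \<Rightarrow> nat set \<Rightarrow> nat set" where
  "policy_step E \<pi> \<phi> S = (case \<pi> (psi_of E S \<phi>) of None \<Rightarrow> S | Some v \<Rightarrow> insert v S)"

text \<open>V(pi,phi): seed set of the policy run under phi (a valid policy selects at most card V seeds).\<close>
definition seeds :: "nat set \<Rightarrow> edge set \<Rightarrow> policy \<Rightarrow> edge set \<Rightarrow> nat set" where
  "seeds V E \<pi> \<phi> = (policy_step E \<pi> \<phi> ^^ card V) {}"

text \<open>Randomized adaptive policies: a distribution R over (valid) deterministic policies,
  independent of the realization.\<close>
definition sigma_policy :: "nat set \<Rightarrow> edge set \<Rightarrow> (edge \<Rightarrow> real) \<Rightarrow> policy pmf \<Rightarrow> real" where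
  "sigma_policy V E p R = measure_pmf.expectation (pair_pmf R (realization_pmf E p))
     (\<lambda>(\<pi>, \<phi>). real (card (Gamma (seeds V E \<pi> \<phi>) \<phi>)))"

definition sel_prob :: "nat set \<Rightarrow> edge set \<Rightarrow> (edge \<Rightarrow> real) \<Rightarrow> policy pmf \<Rightarrow> nat \<Rightarrow> real" where
  "sel_prob V E p R i = measure_pmf.prob (pair_pmf R (realization_pmf E p))
     {(\<pi>, \<phi>). i \<in> seeds V E \<pi> \<phi>}"

definition f_plus :: "nat set \<Rightarrow> edge set \<Rightarrow> (edge \<Rightarrow> real) \<Rightarrow> (nat \<Rightarrow> real) \<Rightarrow> real" where
  "f_plus V E p x = Sup {sigma_policy V E p R | R.
      (\<forall>\<pi>\<in>set_pmf R. valid_policy V \<pi>) \<and> (\<forall>i\<in>V. sel_prob V E p R i = x i)}"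

text \<open>Poisson clocks: the set of nodes whose clock (rate x i) signals at least once during
  a time interval of length t; clocks are independent, and this probability is 1 - exp(-x i t).\<close>
definition signal_pmf :: "nat set \<Rightarrow> (nat \<Rightarrow> real) \<Rightarrow> real \<Rightarrow> nat set pmf" where
  "signal_pmf V x t = map_pmf (\<lambda>b. {i\<in>V. b i})
     (Pi_pmf V False (\<lambda>i. bernoulli_pmf (1 - exp (- (x i * t)))))"

text \<open>Law of Psi(t): seeds selected in [0,t] are those whose clocks signalled in [0,t].\<close>
definition Psi_law :: "nat set \<Rightarrow> edge set \<Rightarrow> (edge \<Rightarrow> real) \<Rightarrow> (nat \<Rightarrow> real) \<Rightarrow> real \<Rightarrow> partial_real pmf" where
  "Psi_law V E p x t = map_pmf (\<lambda>(A, \<phi>). psi_of E A \<phi>)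
     (pair_pmf (signal_pmf V x t) (realization_pmf E p))"

text \<open>Joint law of (Psi(t), Psi(t+h)), h \<ge> 0: by independent increments, the clocks signalling
  in (t,t+h] are independent of those that signalled in [0,t] and of phi.\<close>
definition Psi_pair_law :: "nat set \<Rightarrow> edge set \<Rightarrow> (edge \<Rightarrow> real) \<Rightarrow> (nat \<Rightarrow> real) \<Rightarrow> real \<Rightarrow> real
    \<Rightarrow> (partial_real \<times> partial_real) pmf" where
  "Psi_pair_law V E p x t h = map_pmf (\<lambda>((A, C), \<phi>). (psi_of E A \<phi>, psi_of E (A \<union> C) \<phi>))
     (pair_pmf (pair_pmf (signal_pmf V x t) (signal_pmf V x h)) (realization_pmf E p))"

definition cond_increment :: "nat set \<Rightarrow> edge set \<Rightarrow> (edge \<Rightarrow> real) \<Rightarrow> (nat \<Rightarrow> real) \<Rightarrow> real \<Rightarrow> real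
    \<Rightarrow> partial_real \<Rightarrow> real" where
  "cond_increment V E p x t h \<psi> = measure_pmf.expectation
     (cond_pmf (Psi_pair_law V E p x t h) {q. fst q = \<psi>}) (\<lambda>(a, b). f_psi b - f_psi a)"

end

theory Submission
  imports Defs
begin

lemma Gamma_subset: "S \<subseteq> Gamma S \<phi>"
  unfolding Gamma_def by auto

lemma Gamma_mono: "S \<subseteq> S' \<Longrightarrow> \<phi> \<subseteq> \<phi>' \<Longrightarrow> Gamma S \<phi> \<subseteq> Gamma S' \<phi>'"
  unfolding Gamma_def using rtrancl_mono by blast

lemma Gamma_Un: "Gamma (S \<union> T) \<phi> = Gamma S \<phi> \<union> Gamma T \<phi>"
  unfolding Gamma_def by auto

lemma Gamma_closed: "u \<in> Gamma S \<phi> \<Longrightarrow> (u, w) \<in> \<phi> \<Longrightarrow> w \<in> Gamma S \<phi>"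
  unfolding Gamma_def by (auto intro: rtrancl_into_rtrancl)

lemma Gamma_finite: "finite S \<Longrightarrow> finite \<phi> \<Longrightarrow> finite (Gamma S \<phi>)"
proof -
  assume fs: "finite S" and ff: "finite \<phi>"
  have "Gamma S \<phi> \<subseteq> S \<union> snd ` \<phi>"
  proof
    fix w assume "w \<in> Gamma S \<phi>"
    then obtain s where "s \<in> S" "(s, w) \<in> \<phi>\<^sup>*" unfolding Gamma_def by auto
    from \<open>(s, w) \<in> \<phi>\<^sup>*\<close> show "w \<in> S \<union> snd ` \<phi>"
    proof (cases rule: rtranclE)
      case base then show ?thesis using \<open>s \<in> S\<close> by simp
    next
      case (step y) then show ?thesis by (auto intro: image_eqI[where x="(y, w)"])
    qed
  qed
  then show ?thesis using fs ff by (meson finite_Un finite_imageI finite_subset)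
qed

lemma Gamma_local_sub:
  assumes "\<phi> \<inter> {e. fst e \<in> Gamma S \<phi>} \<subseteq> \<phi>'"
  shows "Gamma S \<phi> \<subseteq> Gamma S \<phi>'"
proof
  fix w assume "w \<in> Gamma S \<phi>"
  then obtain s where s: "s \<in> S" "(s, w) \<in> \<phi>\<^sup>*" unfolding Gamma_def by auto
  from s(2) have "(s, w) \<in> \<phi>'\<^sup>*"
  proof (induction rule: rtrancl_induct)
    case base then show ?case by simp
  next
    case (step y z)
    have "y \<in> Gamma S \<phi>" using s(1) step.hyps(1) unfolding Gamma_def by auto
    then have "(y, z) \<in> \<phi>'" using assms step.hyps(2) by auto
    then show ?case using step.IH by (meson rtrancl_into_rtrancl)
  qed
  then show "w \<in> Gamma S \<phi>'" using s(1) unfolding Gamma_def by auto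
qed

lemma Gamma_local_sup:
  assumes "\<phi>' \<inter> {e. fst e \<in> Gamma S \<phi>} \<subseteq> \<phi>"
  shows "Gamma S \<phi>' \<subseteq> Gamma S \<phi>"
proof
  fix w assume "w \<in> Gamma S \<phi>'"
  then obtain s where s: "s \<in> S" "(s, w) \<in> \<phi>'\<^sup>*" unfolding Gamma_def by auto
  from s(2) have "w \<in> Gamma S \<phi>"
  proof (induction rule: rtrancl_induct)
    case base then show ?case using s(1) Gamma_subset by blast
  next
    case (step y z)
    then have "(y, z) \<in> \<phi>" using assms by auto
    then show ?case using step.IH Gamma_closed by blast
  qed
  then show "w \<in> Gamma S \<phi>" .
qed

lemma Gamma_local:
  assumes "\<phi> \<inter> {e. fst e \<in> Gamma S \<phi>} = \<phi>' \<inter> {e. fst e \<in> Gamma S \<phi>}"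
  shows "Gamma S \<phi>' = Gamma S \<phi>"
  using Gamma_local_sub[of \<phi> S \<phi>'] Gamma_local_sup[of \<phi>' S \<phi>] assms by blast

lemma Gamma_psi_psi_of:
  assumes "\<phi> \<subseteq> E"
  shows "Gamma_psi (psi_of E S \<phi>) = Gamma S \<phi>"
proof -
  have "{e. snd (psi_of E S \<phi>) e = Some True} = \<phi> \<inter> {e. fst e \<in> Gamma S \<phi>}"
    using assms unfolding psi_of_def by auto
  moreover have "Gamma_psi \<psi> = Gamma (fst \<psi>) {e. snd \<psi> e = Some True}" for \<psi>
    by (simp add: Gamma_psi_def Gamma_def)
  moreover have "fst (psi_of E S \<phi>) = S" by (simp add: psi_of_def)
  ultimately have "Gamma_psi (psi_of E S \<phi>) = Gamma S (\<phi> \<inter> {e. fst e \<in> Gamma S \<phi>})"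
    by simp
  also have "\<dots> = Gamma S \<phi>" by (rule Gamma_local) blast
  finally show ?thesis .
qed

lemma f_psi_psi_of:
  assumes "\<phi> \<subseteq> E"
  shows "f_psi (psi_of E S \<phi>) = real (card (Gamma S \<phi>))"
  using Gamma_psi_psi_of[OF assms] unfolding f_psi_def by simp

lemma psi_of_local:
  assumes "\<phi> \<inter> {e. fst e \<in> Gamma S \<phi>} = \<phi>' \<inter> {e. fst e \<in> Gamma S \<phi>}"
  shows "psi_of E S \<phi>' = psi_of E S \<phi>"
proof -
  have G: "Gamma S \<phi>' = Gamma S \<phi>" by (rule Gamma_local[OF assms])
  have "\<forall>e. fst e \<in> Gamma S \<phi> \<longrightarrow> (e \<in> \<phi>') = (e \<in> \<phi>)" using assms by blast
  then show ?thesis by (simp add: psi_of_def G fun_eq_iff)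
qed

lemma psi_of_eqD:
  assumes "psi_of E S \<phi> = psi_of E S' \<phi>'" "\<phi> \<subseteq> E" "\<phi>' \<subseteq> E"
  shows "S' = S" "\<phi> \<inter> {e. fst e \<in> Gamma S \<phi>} = \<phi>' \<inter> {e. fst e \<in> Gamma S \<phi>}"
proof -
  show S: "S' = S" using assms(1) unfolding psi_of_def by simp
  have G: "Gamma S' \<phi>' = Gamma S \<phi>"
    using Gamma_psi_psi_of[OF assms(2), of S] Gamma_psi_psi_of[OF assms(3), of S'] assms(1) by simp
  have key: "(e \<in> \<phi>) = (e \<in> \<phi>')" if "e \<in> E" "fst e \<in> Gamma S \<phi>" for e
  proof -
    have "snd (psi_of E S \<phi>) e = snd (psi_of E S' \<phi>') e" using assms(1) by simp
    moreover have "snd (psi_of E S \<phi>) e = Some (e \<in> \<phi>)" using that by (simp add: psi_of_def)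
    moreover have "snd (psi_of E S' \<phi>') e = Some (e \<in> \<phi>')" using that G by (simp add: psi_of_def)
    ultimately show ?thesis by simp
  qed
  show "\<phi> \<inter> {e. fst e \<in> Gamma S \<phi>} = \<phi>' \<inter> {e. fst e \<in> Gamma S \<phi>}"
    using key assms(2,3) by blast
qed

lemma exp_sum:
  fixes f :: "'a \<Rightarrow> real"
  assumes "finite A" "set_pmf M \<subseteq> A"
  shows "measure_pmf.expectation M f = (\<Sum>a\<in>A. pmf M a * f a)"
  using integral_measure_pmf_real[of A M f] assms by (auto simp: mult.commute)

lemma exp_cong:
  fixes f :: "'a \<Rightarrow> real"
  assumes "\<And>x. x \<in> set_pmf M \<Longrightarrow> f x = g x"
  shows "measure_pmf.expectation M f = measure_pmf.expectation M g"
  by (rule integral_cong_AE) (auto simp: AE_measure_pmf_iff assms)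

lemma exp_pair:
  fixes F :: "'a \<times> 'b \<Rightarrow> real"
  assumes "finite (set_pmf M)" "finite (set_pmf N)"
  shows "measure_pmf.expectation (pair_pmf M N) F =
         measure_pmf.expectation M (\<lambda>a. measure_pmf.expectation N (\<lambda>b. F (a, b)))"
proof -
  have "measure_pmf.expectation (pair_pmf M N) F =
        (\<Sum>ab\<in>set_pmf M \<times> set_pmf N. pmf (pair_pmf M N) ab * F ab)"
    by (rule exp_sum) (use assms in auto)
  also have "\<dots> = (\<Sum>a\<in>set_pmf M. \<Sum>b\<in>set_pmf N. pmf M a * (pmf N b * F (a, b)))"
    unfolding sum.cartesian_product by (rule sum.cong) (auto simp: pmf_pair)
  also have "\<dots> = (\<Sum>a\<in>set_pmf M. pmf M a * (\<Sum>b\<in>set_pmf N. pmf N b * F (a, b)))"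
    by (simp add: sum_distrib_left)
  also have "\<dots> = measure_pmf.expectation M (\<lambda>a. measure_pmf.expectation N (\<lambda>b. F (a, b)))"
    by (subst exp_sum[of "set_pmf M"]) (use assms in \<open>auto intro!: sum.cong simp: exp_sum[of "set_pmf N"]\<close>)
  finally show ?thesis .
qed

lemma exp_pair_swap:
  fixes F :: "'a \<times> 'b \<Rightarrow> real"
  assumes "finite (set_pmf M)" "finite (set_pmf N)"
  shows "measure_pmf.expectation (pair_pmf M N) F =
         measure_pmf.expectation N (\<lambda>b. measure_pmf.expectation M (\<lambda>a. F (a, b)))"
proof -
  have "measure_pmf.expectation (pair_pmf M N) F =
     (\<Sum>a\<in>set_pmf M. pmf M a * (\<Sum>b\<in>set_pmf N. pmf N b * F (a, b)))"
    using exp_pair[OF assms, of F] assms by (simp add: exp_sum[of "set_pmf M"] exp_sum[of "set_pmf N"])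
  also have "\<dots> = (\<Sum>b\<in>set_pmf N. pmf N b * (\<Sum>a\<in>set_pmf M. pmf M a * F (a, b)))"
    by (simp add: sum_distrib_left sum.swap[of _ "set_pmf M"] mult.left_commute)
  also have "\<dots> = measure_pmf.expectation N (\<lambda>b. measure_pmf.expectation M (\<lambda>a. F (a, b)))"
    using assms by (simp add: exp_sum[of "set_pmf M"] exp_sum[of "set_pmf N"])
  finally show ?thesis .
qed

lemma set_realization: "set_pmf (realization_pmf E p) \<subseteq> Pow E"
  unfolding realization_pmf_def by auto

lemma finite_realization: "finite E \<Longrightarrow> finite (set_pmf (realization_pmf E p))"
  using set_realization by (meson finite_Pow_iff finite_subset)

lemma set_signal: "set_pmf (signal_pmf V x t) \<subseteq> Pow V"
  unfolding signal_pmf_def by auto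

lemma finite_signal: "finite V \<Longrightarrow> finite (set_pmf (signal_pmf V x t))"
  using set_signal by (meson finite_Pow_iff finite_subset)

lemma realization_split:
  assumes "finite E"
  shows "realization_pmf E p = map_pmf (\<lambda>(a, b). a \<union> b)
           (pair_pmf (realization_pmf (E \<inter> F) p) (realization_pmf (E - F) p))"
proof -
  have EU: "E = (E \<inter> F) \<union> (E - F)" by blast
  have "Pi_pmf E False (\<lambda>e. bernoulli_pmf (p e)) =
        map_pmf (\<lambda>(f,g) x. if x \<in> E \<inter> F then f x else g x)
          (pair_pmf (Pi_pmf (E \<inter> F) False (\<lambda>e. bernoulli_pmf (p e))) (Pi_pmf (E - F) False (\<lambda>e. bernoulli_pmf (p e))))"
    by (subst EU, rule Pi_pmf_union) (use assms in auto)
  then show ?thesis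
    unfolding realization_pmf_def
    by (simp add: pmf.map_comp o_def map_pair[symmetric] case_prod_unfold) (auto intro!: map_pmf_cong)
qed

lemma cyl_indep:
  fixes D :: "edge set \<Rightarrow> real"
  assumes "finite E" "\<And>\<phi>. \<phi> \<subseteq> E \<Longrightarrow> D \<phi> = D (\<phi> - F)"
  shows "measure_pmf.expectation (realization_pmf E p) (\<lambda>\<phi>. if \<phi> \<inter> F = L then D \<phi> else 0) =
         measure_pmf.expectation (realization_pmf E p) (\<lambda>\<phi>. if \<phi> \<inter> F = L then 1 else 0) *
         measure_pmf.expectation (realization_pmf E p) D"
proof -
  let ?A = "realization_pmf (E \<inter> F) p" and ?B = "realization_pmf (E - F) p"
  have fA: "finite (set_pmf ?A)" and fB: "finite (set_pmf ?B)"
    using assms(1) by (auto intro: finite_realization)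
  have gen: "measure_pmf.expectation (realization_pmf E p) G =
             measure_pmf.expectation ?A (\<lambda>a. measure_pmf.expectation ?B (\<lambda>b. G (a \<union> b)))" for G :: "edge set \<Rightarrow> real"
    by (subst realization_split[OF assms(1), of _ F]) (simp add: exp_pair[OF fA fB] case_prod_unfold)
  have sA: "a \<subseteq> E \<inter> F" if "a \<in> set_pmf ?A" for a using that set_realization by blast
  have sB: "b \<subseteq> E - F" if "b \<in> set_pmf ?B" for b using that set_realization by blast
  have e1: "measure_pmf.expectation (realization_pmf E p) (\<lambda>\<phi>. if \<phi> \<inter> F = L then D \<phi> else 0) =
        measure_pmf.expectation ?A (\<lambda>a. (if a = L then 1 else 0) * measure_pmf.expectation ?B D)"
  proof -
    have "measure_pmf.expectation ?B (\<lambda>b. if (a \<union> b) \<inter> F = L then D (a \<union> b) else 0) =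
          (if a = L then 1 else 0) * measure_pmf.expectation ?B D" if a: "a \<in> set_pmf ?A" for a
    proof -
      have "measure_pmf.expectation ?B (\<lambda>b. if (a \<union> b) \<inter> F = L then D (a \<union> b) else 0) =
            measure_pmf.expectation ?B (\<lambda>b. (if a = L then 1 else 0) * D b)"
      proof (rule exp_cong)
        fix b assume b: "b \<in> set_pmf ?B"
        have h1: "(a \<union> b) \<inter> F = a" using sA[OF a] sB[OF b] by blast
        have h2: "D (a \<union> b) = D b"
        proof -
          have "D (a \<union> b) = D ((a \<union> b) - F)" using assms(2) sA[OF a] sB[OF b] by blast
          moreover have "(a \<union> b) - F = b" using sA[OF a] sB[OF b] by blast
          ultimately show ?thesis by simp
        qed
        show "(if (a \<union> b) \<inter> F = L then D (a \<union> b) else 0) = (if a = L then 1 else 0) * D b"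
          unfolding h1 h2 by simp
      qed
      then show ?thesis by simp
    qed
    note * = this
    show ?thesis by (subst gen, rule exp_cong) (use * in simp)
  qed
  have e2: "measure_pmf.expectation (realization_pmf E p) (\<lambda>\<phi>. if \<phi> \<inter> F = L then 1 else 0::real) =
        measure_pmf.expectation ?A (\<lambda>a. (if a = L then 1 else 0::real))"
  proof -
    have "measure_pmf.expectation ?B (\<lambda>b. if (a \<union> b) \<inter> F = L then 1 else 0::real) =
          (if a = L then 1 else 0)" if a: "a \<in> set_pmf ?A" for a
    proof -
      have "measure_pmf.expectation ?B (\<lambda>b. if (a \<union> b) \<inter> F = L then 1 else 0::real) =
            measure_pmf.expectation ?B (\<lambda>b. (if a = L then 1 else 0))"
      proof (rule exp_cong)
        fix b assume b: "b \<in> set_pmf ?B"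
        have "(a \<union> b) \<inter> F = a" using sA[OF a] sB[OF b] by blast
        then show "(if (a \<union> b) \<inter> F = L then 1 else 0) = (if a = L then 1 else (0::real))" by simp
      qed
      then show ?thesis by simp
    qed
    note * = this
    show ?thesis by (subst gen, rule exp_cong) (use * in simp)
  qed
  have e3: "measure_pmf.expectation (realization_pmf E p) D = measure_pmf.expectation ?B D"
  proof -
    have "measure_pmf.expectation ?B (\<lambda>b. D (a \<union> b)) = measure_pmf.expectation ?B D"
      if a: "a \<in> set_pmf ?A" for a
    proof (rule exp_cong)
      fix b assume b: "b \<in> set_pmf ?B"
      have "D (a \<union> b) = D ((a \<union> b) - F)" using assms(2) sA[OF a] sB[OF b] by blast
      moreover have "(a \<union> b) - F = b" using sA[OF a] sB[OF b] by blast
      ultimately show "D (a \<union> b) = D b" by simp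
    qed
    note * = this
    have "measure_pmf.expectation ?A (\<lambda>a. measure_pmf.expectation ?B (\<lambda>b. D (a \<union> b))) =
          measure_pmf.expectation ?A (\<lambda>a. measure_pmf.expectation ?B D)"
      by (rule exp_cong) (use * in simp)
    then show ?thesis by (simp add: gen)
  qed
  show ?thesis unfolding e1 e2 e3 by simp
qed

definition St :: "edge set \<Rightarrow> policy \<Rightarrow> edge set \<Rightarrow> nat \<Rightarrow> nat set" where
  "St E \<pi> \<phi> k = (policy_step E \<pi> \<phi> ^^ k) {}"

definition Dv :: "nat set \<Rightarrow> nat \<Rightarrow> edge set \<Rightarrow> real" where
  "Dv B v \<phi> = real (card (Gamma {v} (\<phi> - {e. fst e \<in> B}) - B))"

definition Gf :: "nat set \<Rightarrow> policy \<Rightarrow> partial_real \<Rightarrow> edge set \<Rightarrow> real" where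
  "Gf B \<pi> h \<phi> = (case \<pi> h of None \<Rightarrow> 0 | Some v \<Rightarrow> if v \<in> fst h then 0 else
      real (card (Gamma {v} (\<phi> - {e. fst e \<in> Gamma_psi h} - {e. fst e \<in> B}) - B)))"

definition cf :: "edge set \<Rightarrow> (edge \<Rightarrow> real) \<Rightarrow> nat set \<Rightarrow> policy \<Rightarrow> partial_real \<Rightarrow> real" where
  "cf E p B \<pi> h = (case \<pi> h of None \<Rightarrow> 0 | Some v \<Rightarrow> if v \<in> fst h then 0 else
      measure_pmf.expectation (realization_pmf E p) (Dv B v))"

lemma St_0[simp]: "St E \<pi> \<phi> 0 = {}" by (simp add: St_def)

lemma St_Suc: "St E \<pi> \<phi> (Suc k) = policy_step E \<pi> \<phi> (St E \<pi> \<phi> k)"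
  by (simp add: St_def)

lemma fst_psi_of[simp]: "fst (psi_of E S \<phi>) = S" by (simp add: psi_of_def)

lemma St_mono_Suc: "St E \<pi> \<phi> k \<subseteq> St E \<pi> \<phi> (Suc k)"
  by (auto simp: St_Suc policy_step_def split: option.splits)

lemma St_finite: "finite (St E \<pi> \<phi> k)"
  by (induction k) (auto simp: St_Suc policy_step_def split: option.splits)

lemma St_stop:
  assumes "\<phi> \<inter> {e. fst e \<in> Gamma (St E \<pi> \<phi> k) \<phi>} = \<phi>' \<inter> {e. fst e \<in> Gamma (St E \<pi> \<phi> k) \<phi>}"
  shows "St E \<pi> \<phi>' k = St E \<pi> \<phi> k"
  using assms
proof (induction k)
  case 0 then show ?case by simp
next
  case (Suc k)
  have sub: "Gamma (St E \<pi> \<phi> k) \<phi> \<subseteq> Gamma (St E \<pi> \<phi> (Suc k)) \<phi>"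
    using Gamma_mono[OF St_mono_Suc order_refl] .
  have agree: "\<phi> \<inter> {e. fst e \<in> Gamma (St E \<pi> \<phi> k) \<phi>} = \<phi>' \<inter> {e. fst e \<in> Gamma (St E \<pi> \<phi> k) \<phi>}"
    using Suc.prems sub by blast
  have IH: "St E \<pi> \<phi>' k = St E \<pi> \<phi> k" using Suc.IH[OF agree] .
  have "psi_of E (St E \<pi> \<phi> k) \<phi>' = psi_of E (St E \<pi> \<phi> k) \<phi>"
    by (rule psi_of_local[OF agree])
  then show ?case by (simp add: St_Suc policy_step_def IH)
qed

lemma Fk_eq_iff:
  assumes "\<phi> \<subseteq> E" "\<phi>h \<subseteq> E"
  shows "psi_of E (St E \<pi> \<phi> k) \<phi> = psi_of E (St E \<pi> \<phi>h k) \<phi>h \<longleftrightarrow>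
         \<phi> \<inter> {e. fst e \<in> Gamma (St E \<pi> \<phi>h k) \<phi>h} = \<phi>h \<inter> {e. fst e \<in> Gamma (St E \<pi> \<phi>h k) \<phi>h}"
proof
  assume "psi_of E (St E \<pi> \<phi> k) \<phi> = psi_of E (St E \<pi> \<phi>h k) \<phi>h"
  then have "psi_of E (St E \<pi> \<phi>h k) \<phi>h = psi_of E (St E \<pi> \<phi> k) \<phi>" by simp
  from psi_of_eqD(2)[OF this assms(2,1)] show "\<phi> \<inter> {e. fst e \<in> Gamma (St E \<pi> \<phi>h k) \<phi>h} = \<phi>h \<inter> {e. fst e \<in> Gamma (St E \<pi> \<phi>h k) \<phi>h}"
    by simp
next
  assume a: "\<phi> \<inter> {e. fst e \<in> Gamma (St E \<pi> \<phi>h k) \<phi>h} = \<phi>h \<inter> {e. fst e \<in> Gamma (St E \<pi> \<phi>h k) \<phi>h}"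
  have "St E \<pi> \<phi> k = St E \<pi> \<phi>h k" by (rule St_stop) (use a in simp)
  moreover have "psi_of E (St E \<pi> \<phi>h k) \<phi> = psi_of E (St E \<pi> \<phi>h k) \<phi>h"
    by (rule psi_of_local) (use a in simp)
  ultimately show "psi_of E (St E \<pi> \<phi> k) \<phi> = psi_of E (St E \<pi> \<phi>h k) \<phi>h" by simp
qed

lemma card_diff_le_aux:
  fixes X Y Z :: "nat set"
  assumes "finite X" "finite Y" "X \<subseteq> Y \<union> Z" "finite Z"
  shows "real (card X) \<le> real (card Y) + real (card Z)"
proof -
  have "card X \<le> card (Y \<union> Z)" using assms by (intro card_mono) auto
  also have "\<dots> \<le> card Y + card Z" by (rule card_Un_le)
  finally show ?thesis by linarith
qed

lemma U_step:
  assumes "finite \<phi>" "\<phi> \<subseteq> E"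
  shows "real (card (Gamma (St E \<pi> \<phi> (Suc k)) \<phi> - Gamma B \<phi>)) - real (card (Gamma (St E \<pi> \<phi> k) \<phi> - Gamma B \<phi>))
         \<le> Gf B \<pi> (psi_of E (St E \<pi> \<phi> k) \<phi>) \<phi>"
proof -
  let ?S = "St E \<pi> \<phi> k" let ?h = "psi_of E ?S \<phi>"
  have finS: "finite ?S" by (rule St_finite)
  show ?thesis
  proof (cases "\<pi> ?h")
    case None
    then show ?thesis by (simp add: St_Suc policy_step_def Gf_def)
  next
    case (Some v)
    show ?thesis
    proof (cases "v \<in> ?S")
      case True
      then have "St E \<pi> \<phi> (Suc k) = ?S" using Some by (auto simp: St_Suc policy_step_def)
      then show ?thesis using Some True by (simp add: Gf_def)
    next
      case False
      have GS: "St E \<pi> \<phi> (Suc k) = insert v ?S" using Some by (simp add: St_Suc policy_step_def)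
      have Gh: "Gamma_psi ?h = Gamma ?S \<phi>"
        using Gamma_psi_psi_of[OF assms(2), of ?S] by simp
      let ?X = "Gamma {v} (\<phi> - {e. fst e \<in> Gamma ?S \<phi>} - {e. fst e \<in> B}) - B"
      have incl: "Gamma (insert v ?S) \<phi> - Gamma B \<phi> \<subseteq> (Gamma ?S \<phi> - Gamma B \<phi>) \<union> ?X"
      proof
        fix u assume u: "u \<in> Gamma (insert v ?S) \<phi> - Gamma B \<phi>"
        show "u \<in> (Gamma ?S \<phi> - Gamma B \<phi>) \<union> ?X"
        proof (cases "u \<in> Gamma ?S \<phi>")
          case True then show ?thesis using u by blast
        next
          case notS: False
          have "u \<in> Gamma {v} \<phi>" using u notS Gamma_Un[of "{v}" ?S \<phi>] by auto
          then have path: "(v, u) \<in> \<phi>\<^sup>*" unfolding Gamma_def by auto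
          have "\<forall>y. (y, u) \<in> \<phi>\<^sup>* \<longrightarrow> (v, y) \<in> \<phi>\<^sup>* \<longrightarrow> (v, y) \<in> (\<phi> - {e. fst e \<in> Gamma ?S \<phi>} - {e. fst e \<in> B})\<^sup>*"
          proof (intro allI impI)
            fix y assume yu: "(y, u) \<in> \<phi>\<^sup>*" and vy: "(v, y) \<in> \<phi>\<^sup>*"
            from vy yu show "(v, y) \<in> (\<phi> - {e. fst e \<in> Gamma ?S \<phi>} - {e. fst e \<in> B})\<^sup>*"
            proof (induction rule: rtrancl_induct)
              case base then show ?case by simp
            next
              case (step a b)
              have bu: "(a, u) \<in> \<phi>\<^sup>*" using step.hyps(2) step.prems by (meson converse_rtrancl_into_rtrancl)
              have "a \<notin> Gamma ?S \<phi>"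
              proof
                assume "a \<in> Gamma ?S \<phi>"
                then have "u \<in> Gamma ?S \<phi>" using bu unfolding Gamma_def by (auto intro: rtrancl_trans)
                then show False using notS by simp
              qed
              moreover have "a \<notin> B"
              proof
                assume "a \<in> B"
                then have "u \<in> Gamma B \<phi>" using bu unfolding Gamma_def by auto
                then show False using u by simp
              qed
              ultimately have "(a, b) \<in> \<phi> - {e. fst e \<in> Gamma ?S \<phi>} - {e. fst e \<in> B}" using step.hyps(2) by simp
              moreover have "(v, a) \<in> (\<phi> - {e. fst e \<in> Gamma ?S \<phi>} - {e. fst e \<in> B})\<^sup>*"
                using step.IH step.hyps(2) step.prems by (meson converse_rtrancl_into_rtrancl)
              ultimately show ?case by (meson rtrancl_into_rtrancl)
            qed
          qed
          then have "(v, u) \<in> (\<phi> - {e. fst e \<in> Gamma ?S \<phi>} - {e. fst e \<in> B})\<^sup>*" using path by blast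
          moreover have "u \<notin> B" using u Gamma_subset[of B \<phi>] by blast
          ultimately show ?thesis unfolding Gamma_def by blast
        qed
      qed
      have fin1: "finite (Gamma (insert v ?S) \<phi> - Gamma B \<phi>)"
        using Gamma_finite[of "insert v ?S" \<phi>] finS assms by simp
      have fin2: "finite (Gamma ?S \<phi> - Gamma B \<phi>)"
        using Gamma_finite[of ?S \<phi>] finS assms by simp
      have fin3: "finite ?X"
        using Gamma_finite[of "{v}" "\<phi> - {e. fst e \<in> Gamma ?S \<phi>} - {e. fst e \<in> B}"] assms by simp
      have "real (card (Gamma (insert v ?S) \<phi> - Gamma B \<phi>)) \<le> real (card (Gamma ?S \<phi> - Gamma B \<phi>)) + real (card ?X)"
        by (rule card_diff_le_aux[OF fin1 fin2 incl fin3])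
      moreover have "Gf B \<pi> ?h \<phi> = real (card ?X)" using Some False Gh by (simp add: Gf_def)
      ultimately show ?thesis using GS by simp
    qed
  qed
qed

lemma int_real: "finite E \<Longrightarrow> integrable (measure_pmf (realization_pmf E p)) (f :: edge set \<Rightarrow> real)"
  by (rule integrable_measure_pmf_finite) (rule finite_realization)

lemma exp_decomp:
  fixes W :: "'a \<Rightarrow> real"
  assumes "finite (set_pmf M)"
  shows "measure_pmf.expectation M W = (\<Sum>h\<in>g ` set_pmf M. measure_pmf.expectation M (\<lambda>\<phi>. if g \<phi> = h then W \<phi> else 0))"
proof -
  have "(\<Sum>h\<in>g ` set_pmf M. measure_pmf.expectation M (\<lambda>\<phi>. if g \<phi> = h then W \<phi> else 0)) =
        measure_pmf.expectation M (\<lambda>\<phi>. \<Sum>h\<in>g ` set_pmf M. if g \<phi> = h then W \<phi> else 0)"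
    by (rule Bochner_Integration.integral_sum[symmetric]) (rule integrable_measure_pmf_finite[OF assms])
  also have "\<dots> = measure_pmf.expectation M W"
    by (rule exp_cong) (use assms in \<open>simp add: sum.delta'\<close>)
  finally show ?thesis by simp
qed

lemma exp_if_const:
  fixes K :: real
  shows "measure_pmf.expectation M (\<lambda>\<phi>. if c \<phi> then K else 0) =
         measure_pmf.expectation M (\<lambda>\<phi>. if c \<phi> then 1 else 0) * K"
proof -
  have "(\<lambda>\<phi>. if c \<phi> then K else 0) = (\<lambda>\<phi>. (if c \<phi> then 1 else 0) * K)" by auto
  then show ?thesis by simp
qed

lemma Gf_exp_le:
  assumes "finite E"
  shows "measure_pmf.expectation (realization_pmf E p) (Gf B \<pi> h) \<le> cf E p B \<pi> h"
proof (cases "\<pi> h")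
  case None
  then have "Gf B \<pi> h = (\<lambda>_. 0)" by (intro ext) (simp add: Gf_def)
  then show ?thesis using None by (simp add: cf_def)
next
  case (Some v)
  show ?thesis
  proof (cases "v \<in> fst h")
    case True
    then have "Gf B \<pi> h = (\<lambda>_. 0)" using Some by (intro ext) (simp add: Gf_def)
    then show ?thesis using Some True by (simp add: cf_def)
  next
    case False
    have "measure_pmf.expectation (realization_pmf E p) (Gf B \<pi> h) \<le>
          measure_pmf.expectation (realization_pmf E p) (Dv B v)"
    proof (rule integral_mono_AE)
      show "integrable (measure_pmf (realization_pmf E p)) (Gf B \<pi> h)" by (rule int_real[OF assms])
      show "integrable (measure_pmf (realization_pmf E p)) (Dv B v)" by (rule int_real[OF assms])
      show "AE \<phi> in measure_pmf (realization_pmf E p). Gf B \<pi> h \<phi> \<le> Dv B v \<phi>"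
      proof (rule AE_pmfI)
        fix \<phi> assume "\<phi> \<in> set_pmf (realization_pmf E p)"
        then have "\<phi> \<subseteq> E" using set_realization by blast
        then have fin: "finite \<phi>" using assms finite_subset by blast
        have "Gamma {v} (\<phi> - {e. fst e \<in> Gamma_psi h} - {e. fst e \<in> B}) \<subseteq> Gamma {v} (\<phi> - {e. fst e \<in> B})"
          by (rule Gamma_mono) auto
        then have "card (Gamma {v} (\<phi> - {e. fst e \<in> Gamma_psi h} - {e. fst e \<in> B}) - B) \<le> card (Gamma {v} (\<phi> - {e. fst e \<in> B}) - B)"
          using Gamma_finite[of "{v}" "\<phi> - {e. fst e \<in> B}"] fin by (intro card_mono) auto
        then show "Gf B \<pi> h \<phi> \<le> Dv B v \<phi>" using Some False by (simp add: Gf_def Dv_def)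
      qed
    qed
    then show ?thesis using Some False by (simp add: cf_def)
  qed
qed

lemma exp_nonneg_ind: "0 \<le> measure_pmf.expectation M (\<lambda>\<phi>. if c \<phi> then 1 else (0::real))"
  by (rule integral_nonneg_AE) auto

lemma S5:
  assumes "finite E"
  shows "measure_pmf.expectation (realization_pmf E p) (\<lambda>\<phi>. Gf B \<pi> (psi_of E (St E \<pi> \<phi> k) \<phi>) \<phi>) \<le>
         measure_pmf.expectation (realization_pmf E p) (\<lambda>\<phi>. cf E p B \<pi> (psi_of E (St E \<pi> \<phi> k) \<phi>))"
proof -
  let ?M = "realization_pmf E p"
  let ?g = "\<lambda>\<phi>. psi_of E (St E \<pi> \<phi> k) \<phi>"
  have finM: "finite (set_pmf ?M)" by (rule finite_realization[OF assms])
  have "measure_pmf.expectation ?M (\<lambda>\<phi>. if ?g \<phi> = h then Gf B \<pi> (?g \<phi>) \<phi> else 0) \<le>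
        measure_pmf.expectation ?M (\<lambda>\<phi>. if ?g \<phi> = h then cf E p B \<pi> (?g \<phi>) else 0)"
    if h: "h \<in> ?g ` set_pmf ?M" for h
  proof -
    obtain \<phi>h where \<phi>h: "\<phi>h \<in> set_pmf ?M" "h = ?g \<phi>h" using h by blast
    have \<phi>hE: "\<phi>h \<subseteq> E" using \<phi>h(1) set_realization by blast
    define F :: "edge set" where "F = {e. fst e \<in> Gamma (St E \<pi> \<phi>h k) \<phi>h}"
    define L where "L = \<phi>h \<inter> F"
    have GF: "Gamma_psi h = Gamma (St E \<pi> \<phi>h k) \<phi>h" using \<phi>h(2) Gamma_psi_psi_of[OF \<phi>hE] by simp
    have iff: "?g \<phi> = h \<longleftrightarrow> \<phi> \<inter> F = L" if "\<phi> \<in> set_pmf ?M" for \<phi>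
    proof -
      have "\<phi> \<subseteq> E" using that set_realization by blast
      then show ?thesis using Fk_eq_iff[OF _ \<phi>hE, of \<phi> \<pi> k] \<phi>h(2) unfolding F_def L_def by simp
    qed
    have "measure_pmf.expectation ?M (\<lambda>\<phi>. if ?g \<phi> = h then Gf B \<pi> (?g \<phi>) \<phi> else 0) =
          measure_pmf.expectation ?M (\<lambda>\<phi>. if \<phi> \<inter> F = L then Gf B \<pi> h \<phi> else 0)"
      by (rule exp_cong) (use iff in auto)
    also have "\<dots> = measure_pmf.expectation ?M (\<lambda>\<phi>. if \<phi> \<inter> F = L then 1 else 0) *
                    measure_pmf.expectation ?M (Gf B \<pi> h)"
    proof (rule cyl_indep[OF assms])
      fix \<phi> :: "edge set"
      have eqF: "\<phi> - F - {e. fst e \<in> Gamma_psi h} = \<phi> - {e. fst e \<in> Gamma_psi h}" unfolding F_def GF by blast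
      show "Gf B \<pi> h \<phi> = Gf B \<pi> h (\<phi> - F)" unfolding Gf_def eqF by (rule refl)
    qed
    also have "\<dots> \<le> measure_pmf.expectation ?M (\<lambda>\<phi>. if \<phi> \<inter> F = L then 1 else 0) * cf E p B \<pi> h"
      by (rule mult_left_mono[OF Gf_exp_le[OF assms] exp_nonneg_ind])
    also have "\<dots> = measure_pmf.expectation ?M (\<lambda>\<phi>. if \<phi> \<inter> F = L then cf E p B \<pi> h else 0)"
      by (rule exp_if_const[symmetric])
    also have "\<dots> = measure_pmf.expectation ?M (\<lambda>\<phi>. if ?g \<phi> = h then cf E p B \<pi> (?g \<phi>) else 0)"
      by (rule exp_cong) (use iff in auto)
    finally show ?thesis .
  qed
  then have "(\<Sum>h\<in>?g ` set_pmf ?M. measure_pmf.expectation ?M (\<lambda>\<phi>. if ?g \<phi> = h then Gf B \<pi> (?g \<phi>) \<phi> else 0)) \<le>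
             (\<Sum>h\<in>?g ` set_pmf ?M. measure_pmf.expectation ?M (\<lambda>\<phi>. if ?g \<phi> = h then cf E p B \<pi> (?g \<phi>) else 0))"
    by (rule sum_mono)
  then show ?thesis
    using exp_decomp[OF finM, of "\<lambda>\<phi>. Gf B \<pi> (?g \<phi>) \<phi>" ?g] exp_decomp[OF finM, of "\<lambda>\<phi>. cf E p B \<pi> (?g \<phi>)" ?g]
    by simp
qed

definition Tk :: "edge set \<Rightarrow> (edge \<Rightarrow> real) \<Rightarrow> nat set \<Rightarrow> policy \<Rightarrow> nat \<Rightarrow> edge set \<Rightarrow> real" where
  "Tk E p B \<pi> k \<phi> = (\<Sum>i\<in>St E \<pi> \<phi> k. measure_pmf.expectation (realization_pmf E p) (Dv B i))"

lemma Tk_Suc: "Tk E p B \<pi> (Suc k) \<phi> = Tk E p B \<pi> k \<phi> + cf E p B \<pi> (psi_of E (St E \<pi> \<phi> k) \<phi>)"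
proof (cases "\<pi> (psi_of E (St E \<pi> \<phi> k) \<phi>)")
  case None then show ?thesis by (simp add: Tk_def cf_def St_Suc policy_step_def)
next
  case (Some v)
  show ?thesis
  proof (cases "v \<in> St E \<pi> \<phi> k")
    case True then show ?thesis using Some by (simp add: Tk_def cf_def St_Suc policy_step_def insert_absorb)
  next
    case False then show ?thesis using Some St_finite[of E \<pi> \<phi> k]
      by (simp add: Tk_def cf_def St_Suc policy_step_def)
  qed
qed

lemma S7:
  assumes "finite E"
  shows "measure_pmf.expectation (realization_pmf E p) (\<lambda>\<phi>. real (card (Gamma (St E \<pi> \<phi> k) \<phi> - Gamma B \<phi>))) \<le>
         measure_pmf.expectation (realization_pmf E p) (Tk E p B \<pi> k)"
proof (induction k)
  case 0
  have "Gamma {} \<phi> = {}" for \<phi> by (simp add: Gamma_def)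
  then show ?case by (simp add: Tk_def)
next
  case (Suc k)
  let ?M = "realization_pmf E p"
  let ?g = "\<lambda>\<phi>. psi_of E (St E \<pi> \<phi> k) \<phi>"
  have "measure_pmf.expectation ?M (\<lambda>\<phi>. real (card (Gamma (St E \<pi> \<phi> (Suc k)) \<phi> - Gamma B \<phi>))) \<le>
        measure_pmf.expectation ?M (\<lambda>\<phi>. real (card (Gamma (St E \<pi> \<phi> k) \<phi> - Gamma B \<phi>)) + Gf B \<pi> (?g \<phi>) \<phi>)"
  proof (rule integral_mono_AE[OF int_real[OF assms] int_real[OF assms]], rule AE_pmfI)
    fix \<phi> assume "\<phi> \<in> set_pmf ?M"
    then have "\<phi> \<subseteq> E" using set_realization by blast
    moreover then have "finite \<phi>" using assms finite_subset by blast
    ultimately show "real (card (Gamma (St E \<pi> \<phi> (Suc k)) \<phi> - Gamma B \<phi>))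
         \<le> real (card (Gamma (St E \<pi> \<phi> k) \<phi> - Gamma B \<phi>)) + Gf B \<pi> (?g \<phi>) \<phi>"
      using U_step[of \<phi> E \<pi> k B] by simp
  qed
  also have "\<dots> = measure_pmf.expectation ?M (\<lambda>\<phi>. real (card (Gamma (St E \<pi> \<phi> k) \<phi> - Gamma B \<phi>))) +
                  measure_pmf.expectation ?M (\<lambda>\<phi>. Gf B \<pi> (?g \<phi>) \<phi>)"
    by (rule Bochner_Integration.integral_add[OF int_real[OF assms] int_real[OF assms]])
  also have "\<dots> \<le> measure_pmf.expectation ?M (Tk E p B \<pi> k) +
                  measure_pmf.expectation ?M (\<lambda>\<phi>. cf E p B \<pi> (?g \<phi>))"
    using Suc.IH S5[OF assms, where B=B and \<pi>=\<pi> and k=k and p=p] by linarith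
  also have "\<dots> = measure_pmf.expectation ?M (\<lambda>\<phi>. Tk E p B \<pi> k \<phi> + cf E p B \<pi> (?g \<phi>))"
    by (rule Bochner_Integration.integral_add[OF int_real[OF assms] int_real[OF assms], symmetric])
  also have "\<dots> = measure_pmf.expectation ?M (Tk E p B \<pi> (Suc k))"
  proof -
    have "Tk E p B \<pi> (Suc k) = (\<lambda>\<phi>. Tk E p B \<pi> k \<phi> + cf E p B \<pi> (?g \<phi>))" by (rule ext) (rule Tk_Suc)
    then show ?thesis by simp
  qed
  finally show ?case .
qed

lemma adaptive_bound:
  assumes "finite E" "finite B"
  shows "measure_pmf.expectation (realization_pmf E p) (\<lambda>\<phi>. real (card (Gamma (St E \<pi> \<phi> k) \<phi>))) \<le>
         sigma_set E p B + measure_pmf.expectation (realization_pmf E p) (Tk E p B \<pi> k)"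
proof -
  let ?M = "realization_pmf E p"
  have "measure_pmf.expectation ?M (\<lambda>\<phi>. real (card (Gamma (St E \<pi> \<phi> k) \<phi>))) \<le>
        measure_pmf.expectation ?M (\<lambda>\<phi>. real (card (Gamma B \<phi>)) + real (card (Gamma (St E \<pi> \<phi> k) \<phi> - Gamma B \<phi>)))"
  proof (rule integral_mono_AE[OF int_real[OF assms(1)] int_real[OF assms(1)]], rule AE_pmfI)
    fix \<phi> assume "\<phi> \<in> set_pmf ?M"
    then have "\<phi> \<subseteq> E" using set_realization by blast
    then have fin: "finite \<phi>" using assms(1) finite_subset by blast
    have f1: "finite (Gamma (St E \<pi> \<phi> k) \<phi>)" using Gamma_finite[OF St_finite fin] .
    have f2: "finite (Gamma B \<phi>)" using Gamma_finite[OF assms(2) fin] .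
    show "real (card (Gamma (St E \<pi> \<phi> k) \<phi>)) \<le> real (card (Gamma B \<phi>)) + real (card (Gamma (St E \<pi> \<phi> k) \<phi> - Gamma B \<phi>))"
      using card_diff_le_aux[OF f1 f2 _ ] f1 by auto
  qed
  also have "\<dots> = sigma_set E p B + measure_pmf.expectation ?M (\<lambda>\<phi>. real (card (Gamma (St E \<pi> \<phi> k) \<phi> - Gamma B \<phi>)))"
    unfolding sigma_set_def by (rule Bochner_Integration.integral_add[OF int_real[OF assms(1)] int_real[OF assms(1)]])
  also have "\<dots> \<le> sigma_set E p B + measure_pmf.expectation ?M (Tk E p B \<pi> k)"
    using S7[OF assms(1), where B=B and \<pi>=\<pi> and k=k and p=p] by simp
  finally show ?thesis .
qed

lemma pair_exp_mono:
  fixes Y Z :: "'a \<times> 'b \<Rightarrow> real"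
  assumes finM: "finite (set_pmf M)"
    and nnY: "\<And>x. 0 \<le> Y x" and nnZ: "\<And>x. 0 \<le> Z x"
    and bY: "\<And>a b. a \<in> set_pmf R \<Longrightarrow> b \<in> set_pmf M \<Longrightarrow> Y (a, b) \<le> c"
    and bZ: "\<And>a b. a \<in> set_pmf R \<Longrightarrow> b \<in> set_pmf M \<Longrightarrow> Z (a, b) \<le> c"
    and le: "\<And>a. a \<in> set_pmf R \<Longrightarrow> measure_pmf.expectation M (\<lambda>b. Y (a, b)) \<le> measure_pmf.expectation M (\<lambda>b. Z (a, b))"
  shows "measure_pmf.expectation (pair_pmf R M) Y \<le> measure_pmf.expectation (pair_pmf R M) Z"
proof -
  have intY: "integrable (measure_pmf (pair_pmf R M)) Y"
    by (rule measure_pmf.integrable_const_bound[where B=c]) (auto intro!: AE_pmfI simp: nnY bY)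
  have intZ: "integrable (measure_pmf (pair_pmf R M)) Z"
    by (rule measure_pmf.integrable_const_bound[where B=c]) (auto intro!: AE_pmfI simp: nnZ bZ)
  have inner: "(\<integral>\<^sup>+ b. ennreal (W (a, b)) \<partial>measure_pmf M) = ennreal (measure_pmf.expectation M (\<lambda>b. W (a, b)))"
    if "\<And>x. 0 \<le> W x" for W :: "'a \<times> 'b \<Rightarrow> real" and a
    by (rule nn_integral_eq_integral) (auto intro: integrable_measure_pmf_finite[OF finM] simp: that)
  have "ennreal (measure_pmf.expectation (pair_pmf R M) Y) = (\<integral>\<^sup>+ x. ennreal (Y x) \<partial>measure_pmf (pair_pmf R M))"
    by (rule nn_integral_eq_integral[symmetric]) (auto simp: intY nnY)
  also have "\<dots> = (\<integral>\<^sup>+ a. \<integral>\<^sup>+ b. ennreal (Y (a, b)) \<partial>M \<partial>R)" by (rule nn_integral_pair_pmf')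
  also have "\<dots> = (\<integral>\<^sup>+ a. ennreal (measure_pmf.expectation M (\<lambda>b. Y (a, b))) \<partial>R)"
    using inner[of Y, OF nnY] by simp
  also have "\<dots> \<le> (\<integral>\<^sup>+ a. ennreal (measure_pmf.expectation M (\<lambda>b. Z (a, b))) \<partial>R)"
    by (rule nn_integral_mono_AE) (auto intro!: AE_pmfI ennreal_leI le)
  also have "\<dots> = (\<integral>\<^sup>+ a. \<integral>\<^sup>+ b. ennreal (Z (a, b)) \<partial>M \<partial>R)"
    using inner[of Z, OF nnZ] by simp
  also have "\<dots> = (\<integral>\<^sup>+ x. ennreal (Z x) \<partial>measure_pmf (pair_pmf R M))" by (rule nn_integral_pair_pmf'[symmetric])
  also have "\<dots> = ennreal (measure_pmf.expectation (pair_pmf R M) Z)"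
    by (rule nn_integral_eq_integral) (auto simp: intZ nnZ)
  finally show ?thesis
    by (subst (asm) ennreal_le_iff) (auto intro: integral_nonneg_AE simp: nnZ)
qed

lemma St_subset_V:
  assumes "valid_policy V \<pi>"
  shows "St E \<pi> \<phi> k \<subseteq> V"
proof (induction k)
  case 0 then show ?case by simp
next
  case (Suc k)
  show ?case
  proof (cases "\<pi> (psi_of E (St E \<pi> \<phi> k) \<phi>)")
    case None then show ?thesis using Suc by (simp add: St_Suc policy_step_def)
  next
    case (Some v)
    then have "v \<in> V" using assms unfolding valid_policy_def by (metis option.distinct(1) option.inject)
    then show ?thesis using Suc Some by (simp add: St_Suc policy_step_def)
  qed
qed

lemma seeds_St: "seeds V E \<pi> \<phi> = St E \<pi> \<phi> (card V)"
  by (simp add: seeds_def St_def)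

lemma Tk_valid:
  assumes "valid_policy V \<pi>" "finite V"
  shows "Tk E p B \<pi> k \<phi> = (\<Sum>i\<in>V. (if i \<in> St E \<pi> \<phi> k then 1 else 0) * measure_pmf.expectation (realization_pmf E p) (Dv B i))"
proof -
  have "Tk E p B \<pi> k \<phi> = (\<Sum>i\<in>V. if i \<in> St E \<pi> \<phi> k then measure_pmf.expectation (realization_pmf E p) (Dv B i) else 0)"
    unfolding Tk_def using St_subset_V[OF assms(1)] assms(2)
    by (simp add: sum.inter_restrict[symmetric] Int_absorb1 Int_commute)
  then show ?thesis by (auto intro!: sum.cong)
qed

lemma Dv_nonneg: "0 \<le> measure_pmf.expectation M (Dv B i)"
  by (rule integral_nonneg_AE) (simp add: Dv_def)

lemma sigma_nonneg: "0 \<le> sigma_set E p B"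
  unfolding sigma_set_def by (rule integral_nonneg_AE) simp

lemma policy_bound:
  assumes finE: "finite E" and finV: "finite V" and finB: "finite B"
    and valid: "\<forall>\<pi>\<in>set_pmf R. valid_policy V \<pi>"
  shows "sigma_policy V E p R \<le> sigma_set E p B +
           (\<Sum>i\<in>V. sel_prob V E p R i * measure_pmf.expectation (realization_pmf E p) (Dv B i))"
proof -
  let ?M = "realization_pmf E p"
  let ?\<Delta> = "\<lambda>i. measure_pmf.expectation ?M (Dv B i)"
  define Y where "Y = (\<lambda>(\<pi>, \<phi>). real (card (Gamma (seeds V E \<pi> \<phi>) \<phi>)))"
  define Z where "Z = (\<lambda>(\<pi>, \<phi>). sigma_set E p B + (\<Sum>i\<in>V. (if i \<in> seeds V E \<pi> \<phi> then 1 else 0) * ?\<Delta> i))"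
  define c where "c = real (card (V \<union> snd ` E)) + sigma_set E p B + (\<Sum>i\<in>V. ?\<Delta> i)"
  have finM: "finite (set_pmf ?M)" by (rule finite_realization[OF finE])
  have nnY: "0 \<le> Y x" for x by (simp add: Y_def case_prod_unfold)
  have nnZ: "0 \<le> Z x" for x unfolding Z_def case_prod_unfold
    by (intro add_nonneg_nonneg sigma_nonneg sum_nonneg mult_nonneg_nonneg) (auto simp: Dv_nonneg)
  have YZle: "Y (a, b) \<le> c" "Z (a, b) \<le> c" if "a \<in> set_pmf R" "b \<in> set_pmf ?M" for a b
  proof -
    have va: "valid_policy V a" using valid that by blast
    have bE: "b \<subseteq> E" using that set_realization by blast
    have sub: "Gamma (seeds V E a b) b \<subseteq> V \<union> snd ` E"
    proof
      fix w assume "w \<in> Gamma (seeds V E a b) b"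
      then obtain s where s: "s \<in> seeds V E a b" "(s, w) \<in> b\<^sup>*" unfolding Gamma_def by auto
      have "s \<in> V" using s(1) St_subset_V[OF va] by (auto simp: seeds_St)
      from s(2) show "w \<in> V \<union> snd ` E"
      proof (cases rule: rtranclE)
        case base then show ?thesis using \<open>s \<in> V\<close> by simp
      next
        case (step y) then show ?thesis using bE by (auto intro: image_eqI[where x="(y, w)"])
      qed
    qed
    have "card (Gamma (seeds V E a b) b) \<le> card (V \<union> snd ` E)"
      by (rule card_mono) (use finV finE sub in auto)
    moreover have "0 \<le> sigma_set E p B + (\<Sum>i\<in>V. ?\<Delta> i)"
      by (intro add_nonneg_nonneg sigma_nonneg sum_nonneg Dv_nonneg)
    ultimately show "Y (a, b) \<le> c" unfolding Y_def c_def by simp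
    have "(\<Sum>i\<in>V. (if i \<in> seeds V E a b then 1 else 0) * ?\<Delta> i) \<le> (\<Sum>i\<in>V. ?\<Delta> i)"
      by (rule sum_mono) (auto simp: Dv_nonneg)
    then show "Z (a, b) \<le> c" unfolding Z_def c_def by simp
  qed
  have le: "measure_pmf.expectation ?M (\<lambda>b. Y (a, b)) \<le> measure_pmf.expectation ?M (\<lambda>b. Z (a, b))"
    if "a \<in> set_pmf R" for a
  proof -
    have va: "valid_policy V a" using valid that by blast
    have "measure_pmf.expectation ?M (\<lambda>b. Y (a, b)) \<le> sigma_set E p B + measure_pmf.expectation ?M (Tk E p B a (card V))"
      unfolding Y_def seeds_St by simp (rule adaptive_bound[OF finE finB])
    also have "\<dots> = measure_pmf.expectation ?M (\<lambda>b. Z (a, b))"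
    proof -
      have "measure_pmf.expectation ?M (\<lambda>b. Z (a, b)) = sigma_set E p B + measure_pmf.expectation ?M (Tk E p B a (card V))"
        unfolding Z_def seeds_St Tk_valid[OF va finV] by (simp add: Bochner_Integration.integral_add[OF int_real[OF finE] int_real[OF finE]])
      then show ?thesis by simp
    qed
    finally show ?thesis .
  qed
  have main: "measure_pmf.expectation (pair_pmf R ?M) Y \<le> measure_pmf.expectation (pair_pmf R ?M) Z"
    by (rule pair_exp_mono[OF finM nnY nnZ YZle le])
  have intI: "integrable (measure_pmf (pair_pmf R ?M)) (\<lambda>x. (if i \<in> seeds V E (fst x) (snd x) then 1 else 0) * ?\<Delta> i)" for i
    by (rule measure_pmf.integrable_const_bound[where B="?\<Delta> i"]) (auto simp: Dv_nonneg)
  have selp: "sel_prob V E p R i = measure_pmf.expectation (pair_pmf R ?M) (\<lambda>x. if i \<in> seeds V E (fst x) (snd x) then 1 else 0)" for i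
  proof -
    have "(\<lambda>x. if i \<in> seeds V E (fst x) (snd x) then 1 else (0::real)) = indicator {(\<pi>, \<phi>). i \<in> seeds V E \<pi> \<phi>}"
      by (auto simp: indicator_def fun_eq_iff)
    then show ?thesis unfolding sel_prob_def by simp
  qed
  have "measure_pmf.expectation (pair_pmf R ?M) Z =
        sigma_set E p B + (\<Sum>i\<in>V. measure_pmf.expectation (pair_pmf R ?M) (\<lambda>x. (if i \<in> seeds V E (fst x) (snd x) then 1 else 0) * ?\<Delta> i))"
    unfolding Z_def case_prod_unfold
    by (subst Bochner_Integration.integral_add) (auto intro!: Bochner_Integration.integrable_sum intI simp: Bochner_Integration.integral_sum[OF intI])
  also have "\<dots> = sigma_set E p B + (\<Sum>i\<in>V. sel_prob V E p R i * ?\<Delta> i)"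
    by (simp add: selp)
  finally show ?thesis using main unfolding sigma_policy_def Y_def by simp
qed

definition fixed_pol :: "nat set \<Rightarrow> policy" where
  "fixed_pol S \<psi> = (if S - fst \<psi> = {} then None else Some (Min (S - fst \<psi>)))"

lemma fixed_pol_valid:
  assumes "S \<subseteq> V" "finite S"
  shows "valid_policy V (fixed_pol S)"
  unfolding valid_policy_def fixed_pol_def
proof
  fix \<psi> :: partial_real
  show "(if S - fst \<psi> = {} then None else Some (Min (S - fst \<psi>))) = None \<or>
        (\<exists>v. (if S - fst \<psi> = {} then None else Some (Min (S - fst \<psi>))) = Some v \<and> v \<in> V \<and> v \<notin> fst \<psi>)"
  proof (cases "S - fst \<psi> = {}")
    case False
    have "Min (S - fst \<psi>) \<in> S - fst \<psi>" using False assms(2) by (intro Min_in) auto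
    then show ?thesis using False assms(1) by auto
  qed simp
qed

lemma St_fixed:
  assumes "finite S"
  shows "St E (fixed_pol S) \<phi> k \<subseteq> S \<and> card (St E (fixed_pol S) \<phi> k) = min k (card S)"
proof (induction k)
  case 0 then show ?case by simp
next
  case (Suc k)
  let ?T = "St E (fixed_pol S) \<phi> k"
  have T: "?T \<subseteq> S" "card ?T = min k (card S)" using Suc by auto
  show ?case
  proof (cases "S - ?T = {}")
    case True
    then have "?T = S" using T by blast
    then have "card S \<le> k" using T by (metis min.absorb_iff2 min_def)
    moreover have "St E (fixed_pol S) \<phi> (Suc k) = ?T" using True by (simp add: St_Suc policy_step_def fixed_pol_def)
    ultimately show ?thesis using T \<open>?T = S\<close> by simp
  next
    case False
    let ?v = "Min (S - ?T)"
    have v: "?v \<in> S - ?T" using False assms by (intro Min_in) auto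
    have eq: "St E (fixed_pol S) \<phi> (Suc k) = insert ?v ?T" using False by (simp add: St_Suc policy_step_def fixed_pol_def)
    have "?T \<subset> S" using T(1) False by blast
    then have "card ?T < card S" using psubset_card_mono[OF assms] by blast
    then have "card ?T = k" using T(2) by linarith
    moreover have "finite ?T" using St_finite .
    ultimately have "card (insert ?v ?T) = Suc k" using v by simp
    moreover have "Suc k \<le> card S" using \<open>card ?T < card S\<close> \<open>card ?T = k\<close> by simp
    ultimately show ?thesis using eq v T(1) by auto
  qed
qed

lemma seeds_fixed:
  assumes "finite V" "S \<subseteq> V"
  shows "seeds V E (fixed_pol S) \<phi> = S"
proof -
  have fS: "finite S" using assms finite_subset by blast
  have "card S \<le> card V" using assms by (rule card_mono)
  then have "St E (fixed_pol S) \<phi> (card V) \<subseteq> S \<and> card (St E (fixed_pol S) \<phi> (card V)) = card S"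
    using St_fixed[OF fS, of E \<phi> "card V"] by simp
  then show ?thesis unfolding seeds_St using fS by (meson card_subset_eq)
qed

definition sel_pmf :: "nat set \<Rightarrow> (nat \<Rightarrow> real) \<Rightarrow> nat set pmf" where
  "sel_pmf V x = map_pmf (\<lambda>b. {i\<in>V. b i}) (Pi_pmf V False (\<lambda>i. bernoulli_pmf (x i)))"

lemma set_sel_pmf: "set_pmf (sel_pmf V x) \<subseteq> Pow V"
  unfolding sel_pmf_def by auto

lemma prob_sel_pmf:
  assumes "finite V" "i \<in> V" "0 \<le> x i" "x i \<le> 1"
  shows "measure_pmf.prob (sel_pmf V x) {S. i \<in> S} = x i"
proof -
  have "measure_pmf.prob (sel_pmf V x) {S. i \<in> S} =
        measure_pmf.prob (Pi_pmf V False (\<lambda>i. bernoulli_pmf (x i))) {b. b i}"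
    unfolding sel_pmf_def using assms(2) by (simp add: vimage_def)
  also have "\<dots> = measure_pmf.prob (map_pmf (\<lambda>b. b i) (Pi_pmf V False (\<lambda>i. bernoulli_pmf (x i)))) {True}"
    by (simp add: vimage_def)
  also have "\<dots> = measure_pmf.prob (bernoulli_pmf (x i)) {True}"
    using Pi_pmf_component[OF assms(1), of i False "\<lambda>i. bernoulli_pmf (x i)"] assms(2) by simp
  also have "\<dots> = x i" using assms(3,4) by (simp add: measure_pmf_single)
  finally show ?thesis .
qed

lemma fplus_nonempty:
  assumes finV: "finite V" and x01: "\<forall>i\<in>V. 0 \<le> x i \<and> x i \<le> 1"
  shows "\<exists>R. (\<forall>\<pi>\<in>set_pmf R. valid_policy V \<pi>) \<and> (\<forall>i\<in>V. sel_prob V E p R i = x i)"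
proof -
  define R where "R = map_pmf fixed_pol (sel_pmf V x)"
  have "\<forall>\<pi>\<in>set_pmf R. valid_policy V \<pi>"
    unfolding R_def using set_sel_pmf finV
    by (auto intro!: fixed_pol_valid dest: finite_subset)
  moreover have "sel_prob V E p R i = x i" if i: "i \<in> V" for i
  proof -
    let ?M = "realization_pmf E p"
    have "sel_prob V E p R i = measure_pmf.prob (pair_pmf (sel_pmf V x) ?M)
            ((\<lambda>(S, \<phi>). (fixed_pol S, \<phi>)) -` {(\<pi>, \<phi>). i \<in> seeds V E \<pi> \<phi>})"
      unfolding sel_prob_def R_def pair_map_pmf1 by (simp add: apfst_def map_prod_def)
    also have "\<dots> = measure_pmf.prob (pair_pmf (sel_pmf V x) ?M) (fst -` {S. i \<in> S})"
    proof -
      let ?P = "pair_pmf (sel_pmf V x) ?M"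
      have "((\<lambda>(S, \<phi>). (fixed_pol S, \<phi>)) -` {(\<pi>, \<phi>). i \<in> seeds V E \<pi> \<phi>}) \<inter> set_pmf ?P =
            (fst -` {S. i \<in> S}) \<inter> set_pmf ?P"
      proof (intro set_eqI iffI)
        fix z assume z: "z \<in> ((\<lambda>(S, \<phi>). (fixed_pol S, \<phi>)) -` {(\<pi>, \<phi>). i \<in> seeds V E \<pi> \<phi>}) \<inter> set_pmf ?P"
        then have "fst z \<in> set_pmf (sel_pmf V x)" by (cases z) (auto simp: set_pair_pmf)
        then have "fst z \<subseteq> V" using set_sel_pmf[of V x] by blast
        then show "z \<in> (fst -` {S. i \<in> S}) \<inter> set_pmf ?P" using z seeds_fixed[OF finV] by (auto simp: case_prod_unfold)
      next
        fix z assume z: "z \<in> (fst -` {S. i \<in> S}) \<inter> set_pmf ?P"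
        then have "fst z \<in> set_pmf (sel_pmf V x)" by (cases z) (auto simp: set_pair_pmf)
        then have "fst z \<subseteq> V" using set_sel_pmf[of V x] by blast
        then show "z \<in> ((\<lambda>(S, \<phi>). (fixed_pol S, \<phi>)) -` {(\<pi>, \<phi>). i \<in> seeds V E \<pi> \<phi>}) \<inter> set_pmf ?P"
          using z seeds_fixed[OF finV] by (auto simp: case_prod_unfold)
      qed
      then show ?thesis by (metis measure_Int_set_pmf)
    qed
    also have "\<dots> = measure_pmf.prob (sel_pmf V x) {S. i \<in> S}"
      by (metis map_fst_pair_pmf measure_map_pmf)
    also have "\<dots> = x i" using prob_sel_pmf[OF finV i] x01 i by auto
    finally show ?thesis .
  qed
  ultimately show ?thesis by blast
qed

lemma pmf_setPi:
  assumes finV: "finite V" and r: "\<forall>i\<in>V. 0 \<le> r i \<and> r i \<le> 1" and C: "C \<subseteq> V"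
  shows "pmf (map_pmf (\<lambda>b. {i\<in>V. b i}) (Pi_pmf V False (\<lambda>i. bernoulli_pmf (r i)))) C =
         (\<Prod>i\<in>V. if i \<in> C then r i else 1 - r i)"
proof -
  let ?Q = "Pi_pmf V False (\<lambda>i. bernoulli_pmf (r i))"
  let ?f = "\<lambda>b. {i\<in>V. b i}"
  let ?b0 = "\<lambda>i. i \<in> C"
  have sQ: "set_pmf ?Q \<subseteq> {b. \<forall>x. x \<notin> V \<longrightarrow> b x = False}" by (rule set_Pi_pmf_subset[OF finV])
  have "?f -` {C} \<inter> set_pmf ?Q = {?b0} \<inter> set_pmf ?Q"
  proof (intro set_eqI iffI)
    fix b assume b: "b \<in> ?f -` {C} \<inter> set_pmf ?Q"
    then have bV: "\<forall>x. x \<notin> V \<longrightarrow> b x = False" using sQ by blast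
    have bC: "{i\<in>V. b i} = C" using b by simp
    have "b j = (j \<in> C)" for j
    proof (cases "j \<in> V")
      case True then show ?thesis using bC by blast
    next
      case False then show ?thesis using bV C by blast
    qed
    then have "b = ?b0" by (rule ext)
    then show "b \<in> {?b0} \<inter> set_pmf ?Q" using b by simp
  next
    fix b assume b: "b \<in> {?b0} \<inter> set_pmf ?Q"
    then show "b \<in> ?f -` {C} \<inter> set_pmf ?Q" using C by auto
  qed
  note eqs = this
  have "pmf (map_pmf ?f ?Q) C = measure_pmf.prob ?Q (?f -` {C})" by (rule pmf_map)
  also have "\<dots> = measure_pmf.prob ?Q (?f -` {C} \<inter> set_pmf ?Q)" by (rule measure_Int_set_pmf[symmetric])
  also have "\<dots> = measure_pmf.prob ?Q ({?b0} \<inter> set_pmf ?Q)" by (simp only: eqs)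
  also have "\<dots> = measure_pmf.prob ?Q {?b0}" by (rule measure_Int_set_pmf)
  also have "\<dots> = pmf ?Q ?b0" by (rule measure_pmf_single)
  finally have "pmf (map_pmf ?f ?Q) C = pmf ?Q ?b0" .
  also have "\<dots> = (\<Prod>i\<in>V. pmf (bernoulli_pmf (r i)) (i \<in> C))"
    using C by (subst pmf_Pi[OF finV]) auto
  also have "\<dots> = (\<Prod>i\<in>V. if i \<in> C then r i else 1 - r i)"
    using r by (intro prod.cong) auto
  finally show ?thesis .
qed

lemma q_lim: "((\<lambda>h. (1 - exp (- (a * h))) / h) \<longlongrightarrow> (a::real)) (at_right 0)"
proof -
  have d: "((\<lambda>h. exp (- (a * h))) has_field_derivative (exp (- (a * 0)) * (- a))) (at 0 within {0<..})"
    by (auto intro!: derivative_eq_intros)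
  then have "((\<lambda>y. (exp (- (a * y)) - exp (- (a * 0))) / (y - 0)) \<longlongrightarrow> exp (- (a * 0)) * (- a)) (at 0 within {0<..})"
    by (simp add: has_field_derivative_iff)
  then have "((\<lambda>y. (exp (- (a * y)) - 1) / y) \<longlongrightarrow> - a) (at_right 0)" by simp
  then have "((\<lambda>y. - ((exp (- (a * y)) - 1) / y)) \<longlongrightarrow> - (- a)) (at_right 0)" by (rule tendsto_minus)
  then show ?thesis by (simp add: minus_divide_left)
qed

lemma q0_lim: "((\<lambda>h. 1 - exp (- (a * h))) \<longlongrightarrow> (0::real)) (at_right 0)"
proof -
  have "((\<lambda>h. 1 - exp (- (a * h))) \<longlongrightarrow> 1 - exp (- (a * 0))) (at_right (0::real))"
    by (intro tendsto_intros)
  then show ?thesis by simp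
qed

definition qf :: "real \<Rightarrow> real \<Rightarrow> real" where "qf a h = 1 - exp (- (a * h))"

lemma pmfC_lim:
  assumes finV: "finite V" and C: "C \<subseteq> V" and i: "i \<in> C"
  shows "((\<lambda>h. (\<Prod>j\<in>V. if j \<in> C then qf (x j) h else 1 - qf (x j) h) / h) \<longlongrightarrow>
          (if C = {i} then x i else 0)) (at_right 0)"
proof -
  have iV: "i \<in> V" using C i by blast
  have eq: "(\<Prod>j\<in>V. if j \<in> C then qf (x j) h else 1 - qf (x j) h) / h =
            (qf (x i) h / h) * (\<Prod>j\<in>V - {i}. if j \<in> C then qf (x j) h else 1 - qf (x j) h)" for h
    using prod.remove[OF finV iV, of "\<lambda>j. if j \<in> C then qf (x j) h else 1 - qf (x j) h"] i by simp
  have l1: "((\<lambda>h. qf (x i) h / h) \<longlongrightarrow> x i) (at_right 0)" unfolding qf_def by (rule q_lim)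
  have l2: "((\<lambda>h. \<Prod>j\<in>V - {i}. if j \<in> C then qf (x j) h else 1 - qf (x j) h) \<longlongrightarrow>
             (\<Prod>j\<in>V - {i}. if j \<in> C then 0 else 1)) (at_right 0)"
  proof (rule tendsto_prod)
    fix j assume "j \<in> V - {i}"
    show "((\<lambda>h. if j \<in> C then qf (x j) h else 1 - qf (x j) h) \<longlongrightarrow> (if j \<in> C then 0 else 1)) (at_right 0)"
    proof (cases "j \<in> C")
      case True then show ?thesis unfolding qf_def using q0_lim by simp
    next
      case False
      have "((\<lambda>h. 1 - qf (x j) h) \<longlongrightarrow> 1 - 0) (at_right 0)"
        unfolding qf_def by (intro tendsto_diff tendsto_const q0_lim)
      then show ?thesis using False by simp
    qed
  qed
  have pv: "(\<Prod>j\<in>V - {i}. if j \<in> C then 0 else (1::real)) = (if C = {i} then 1 else 0)"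
  proof (cases "C = {i}")
    case True then show ?thesis by (auto intro!: prod.neutral)
  next
    case False
    then obtain j where j: "j \<in> C" "j \<noteq> i" using i by blast
    then have "j \<in> V - {i}" using C by blast
    then have "(\<Prod>j\<in>V - {i}. if j \<in> C then 0 else (1::real)) = 0"
      using j finV by (subst prod_zero_iff) auto
    then show ?thesis using False by simp
  qed
  have "((\<lambda>h. (qf (x i) h / h) * (\<Prod>j\<in>V - {i}. if j \<in> C then qf (x j) h else 1 - qf (x j) h)) \<longlongrightarrow>
         x i * (\<Prod>j\<in>V - {i}. if j \<in> C then 0 else 1)) (at_right 0)"
    by (rule tendsto_mult[OF l1 l2])
  moreover have fe: "(\<lambda>h. (\<Prod>j\<in>V. if j \<in> C then qf (x j) h else 1 - qf (x j) h) / h) =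
     (\<lambda>h. (qf (x i) h / h) * (\<Prod>j\<in>V - {i}. if j \<in> C then qf (x j) h else 1 - qf (x j) h))"
    by (rule ext) (rule eq)
  moreover have xe: "x i * (\<Prod>j\<in>V - {i}. if j \<in> C then 0 else 1) = (if C = {i} then x i else 0)"
    unfolding pv by simp
  ultimately show ?thesis by simp
qed

lemma sum_lim:
  fixes K :: "nat set \<Rightarrow> real"
  assumes finV: "finite V" and K0: "K {} = 0"
  shows "((\<lambda>h. (\<Sum>C\<in>Pow V. (\<Prod>j\<in>V. if j \<in> C then qf (x j) h else 1 - qf (x j) h) * K C) / h) \<longlongrightarrow>
          (\<Sum>i\<in>V. x i * K {i})) (at_right 0)"
proof -
  define lf where "lf C = (\<Sum>i\<in>V. if C = {i} then x i else 0)" for C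
  have eqf: "(\<Sum>C\<in>Pow V. (\<Prod>j\<in>V. if j \<in> C then qf (x j) h else 1 - qf (x j) h) * K C) / h =
        (\<Sum>C\<in>Pow V. ((\<Prod>j\<in>V. if j \<in> C then qf (x j) h else 1 - qf (x j) h) / h) * K C)" for h
    by (simp add: sum_divide_distrib)
  have "((\<lambda>h. \<Sum>C\<in>Pow V. ((\<Prod>j\<in>V. if j \<in> C then qf (x j) h else 1 - qf (x j) h) / h) * K C) \<longlongrightarrow>
         (\<Sum>C\<in>Pow V. lf C * K C)) (at_right 0)"
  proof (rule tendsto_sum)
    fix C assume C: "C \<in> Pow V"
    show "((\<lambda>h. ((\<Prod>j\<in>V. if j \<in> C then qf (x j) h else 1 - qf (x j) h) / h) * K C) \<longlongrightarrow> lf C * K C) (at_right 0)"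
    proof (cases "C = {}")
      case True then show ?thesis using K0 by simp
    next
      case False
      then obtain i where i: "i \<in> C" by blast
      have CV: "C \<subseteq> V" using C by blast
      have lf_eq: "lf C = (if C = {i} then x i else 0)"
      proof (cases "C = {i}")
        case True then show ?thesis unfolding lf_def using C i finV by (simp add: sum.delta)
      next
        case False
        have "(if C = {j} then x j else 0) = 0" if "j \<in> V" for j using False i by auto
        then show ?thesis unfolding lf_def using False by simp
      qed
      show ?thesis unfolding lf_eq by (rule tendsto_mult_right[OF pmfC_lim[OF finV CV i]])
    qed
  qed
  moreover have "(\<Sum>C\<in>Pow V. lf C * K C) = (\<Sum>i\<in>V. x i * K {i})"
  proof -
    have "(\<Sum>C\<in>Pow V. lf C * K C) = (\<Sum>C\<in>Pow V. \<Sum>i\<in>V. if C = {i} then x i * K C else 0)"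
      unfolding lf_def sum_distrib_right by (intro sum.cong refl) auto
    also have "\<dots> = (\<Sum>i\<in>V. \<Sum>C\<in>Pow V. if C = {i} then x i * K C else 0)" by (rule sum.swap)
    also have "\<dots> = (\<Sum>i\<in>V. x i * K {i})"
      using finV by (intro sum.cong refl) (simp add: sum.delta')
    finally show ?thesis .
  qed
  ultimately show ?thesis unfolding eqf by simp
qed

lemma cond_exp:
  fixes g :: "'a \<Rightarrow> real"
  assumes fin: "finite (set_pmf P)" and ne: "set_pmf P \<inter> S \<noteq> {}"
  shows "measure_pmf.expectation (cond_pmf P S) g =
         measure_pmf.expectation P (\<lambda>q. if q \<in> S then g q else 0) / measure_pmf.prob P S"
proof -
  have "measure_pmf.expectation (cond_pmf P S) g = (\<Sum>a\<in>set_pmf P. pmf (cond_pmf P S) a * g a)"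
    by (rule exp_sum) (use fin ne in auto)
  also have "\<dots> = (\<Sum>a\<in>set_pmf P. pmf P a * (if a \<in> S then g a else 0) / measure_pmf.prob P S)"
    by (intro sum.cong refl) (simp add: pmf_cond[OF ne])
  also have "\<dots> = (\<Sum>a\<in>set_pmf P. pmf P a * (if a \<in> S then g a else 0)) / measure_pmf.prob P S"
    by (simp add: sum_divide_distrib)
  also have "\<dots> = measure_pmf.expectation P (\<lambda>q. if q \<in> S then g q else 0) / measure_pmf.prob P S"
    by (subst exp_sum[OF fin order_refl]) simp
  finally show ?thesis .
qed

lemma prob_as_exp:
  assumes fin: "finite (set_pmf P)"
  shows "measure_pmf.prob P S = measure_pmf.expectation P (\<lambda>q. if q \<in> S then 1 else (0::real))"
proof -
  have "measure_pmf.expectation P (\<lambda>q. if q \<in> S then 1 else (0::real)) = (\<Sum>a\<in>set_pmf P. pmf P a * (if a \<in> S then 1 else 0))"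
    by (rule exp_sum[OF fin order_refl])
  also have "\<dots> = (\<Sum>a\<in>set_pmf P \<inter> S. pmf P a)"
    by (subst sum.inter_restrict[OF fin]) (intro sum.cong refl, simp)
  also have "\<dots> = measure_pmf.prob P (set_pmf P \<inter> S)"
    by (rule measure_measure_pmf_finite[symmetric]) (use fin in auto)
  also have "\<dots> = measure_pmf.prob P S"
    by (metis Int_commute measure_Int_set_pmf)
  finally show ?thesis by simp
qed

lemma Gamma_add_card:
  assumes GB: "Gamma A1 \<phi> = B" and fphi: "finite \<phi>" and fA: "finite A1"
  shows "real (card (Gamma (A1 \<union> {i}) \<phi>)) - real (card B) = Dv B i \<phi>"
proof -
  let ?F = "{e. fst e \<in> B}"
  let ?X = "Gamma {i} (\<phi> - ?F)"
  have sub1: "Gamma {i} \<phi> \<subseteq> B \<union> ?X"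
  proof
    fix w assume "w \<in> Gamma {i} \<phi>"
    then have "(i, w) \<in> \<phi>\<^sup>*" unfolding Gamma_def by auto
    then show "w \<in> B \<union> ?X"
    proof (induction rule: rtrancl_induct)
      case base then show ?case using Gamma_subset[of "{i}" "\<phi> - ?F"] by auto
    next
      case (step y z)
      show ?case
      proof (cases "y \<in> B")
        case True then show ?thesis using Gamma_closed[of y A1 \<phi> z] GB step.hyps(2) by auto
      next
        case False
        then have "y \<in> ?X" using step.IH by auto
        moreover have "(y, z) \<in> \<phi> - ?F" using False step.hyps(2) by auto
        ultimately show ?thesis using Gamma_closed by blast
      qed
    qed
  qed
  have sub2: "?X \<subseteq> Gamma {i} \<phi>" by (rule Gamma_mono) auto
  have eq: "Gamma (A1 \<union> {i}) \<phi> = B \<union> (?X - B)"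
    using Gamma_Un[of A1 "{i}" \<phi>] GB sub1 sub2 by blast
  have fB: "finite B" using GB Gamma_finite[OF fA fphi] by simp
  have fX: "finite (?X - B)" using Gamma_finite[of "{i}" "\<phi> - ?F"] fphi by simp
  have "card (Gamma (A1 \<union> {i}) \<phi>) = card B + card (?X - B)"
    unfolding eq by (rule card_Un_disjoint[OF fB fX]) blast
  then show ?thesis unfolding Dv_def by simp
qed

lemma K_one:
  fixes SA :: "nat set pmf"
  assumes finE: "finite E" and \<psi>: "\<psi> = psi_of E A1 \<phi>1" and \<phi>1E: "\<phi>1 \<subseteq> E" and fA1: "finite A1"
  shows "measure_pmf.expectation SA (\<lambda>A. measure_pmf.expectation (realization_pmf E p)
           (\<lambda>\<phi>. if psi_of E A \<phi> = \<psi> then f_psi (psi_of E (A \<union> {i}) \<phi>) - f_psi (psi_of E A \<phi>) else 0)) =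
         measure_pmf.expectation SA (\<lambda>A. measure_pmf.expectation (realization_pmf E p)
           (\<lambda>\<phi>. if psi_of E A \<phi> = \<psi> then 1 else 0)) *
         measure_pmf.expectation (realization_pmf E p) (Dv (Gamma_psi \<psi>) i)"
proof -
  let ?M = "realization_pmf E p"
  define B where "B = Gamma A1 \<phi>1"
  have B\<psi>: "Gamma_psi \<psi> = B" unfolding B_def \<psi> by (rule Gamma_psi_psi_of[OF \<phi>1E])
  define F :: "edge set" where "F = {e. fst e \<in> B}"
  define L where "L = \<phi>1 \<inter> F"
  have iff: "psi_of E A \<phi> = \<psi> \<longleftrightarrow> A = A1 \<and> \<phi> \<inter> F = L" if "\<phi> \<subseteq> E" for A \<phi>
  proof
    assume "psi_of E A \<phi> = \<psi>"
    then have e: "psi_of E A1 \<phi>1 = psi_of E A \<phi>" using \<psi> by simp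
    show "A = A1 \<and> \<phi> \<inter> F = L"
      using psi_of_eqD[OF e \<phi>1E that] unfolding F_def L_def B_def by blast
  next
    assume a: "A = A1 \<and> \<phi> \<inter> F = L"
    have "psi_of E A1 \<phi> = psi_of E A1 \<phi>1"
      by (rule psi_of_local) (use a in \<open>auto simp: F_def L_def B_def\<close>)
    then show "psi_of E A \<phi> = \<psi>" using a \<psi> by simp
  qed
  have GB: "Gamma A1 \<phi> = B" if "\<phi> \<subseteq> E" "\<phi> \<inter> F = L" for \<phi>
    unfolding B_def by (rule Gamma_local) (use that in \<open>auto simp: F_def L_def B_def\<close>)
  have inner: "measure_pmf.expectation ?M
           (\<lambda>\<phi>. if psi_of E A \<phi> = \<psi> then f_psi (psi_of E (A \<union> {i}) \<phi>) - f_psi (psi_of E A \<phi>) else 0) =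
        (if A = A1 then measure_pmf.expectation ?M (\<lambda>\<phi>. if \<phi> \<inter> F = L then 1 else 0) else 0) *
         measure_pmf.expectation ?M (Dv B i)" for A
  proof (cases "A = A1")
    case False
    have "measure_pmf.expectation ?M
           (\<lambda>\<phi>. if psi_of E A \<phi> = \<psi> then f_psi (psi_of E (A \<union> {i}) \<phi>) - f_psi (psi_of E A \<phi>) else 0) =
          measure_pmf.expectation ?M (\<lambda>\<phi>. 0)" (is "measure_pmf.expectation _ ?l = measure_pmf.expectation _ ?r")
    proof (rule exp_cong)
      fix \<phi> assume "\<phi> \<in> set_pmf ?M"
      then have \<phi>E: "\<phi> \<subseteq> E" using set_realization by blast
      show "?l \<phi> = ?r \<phi>" using iff[OF \<phi>E] False by simp
    qed
    then show ?thesis using False by simp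
  next
    case True
    have "measure_pmf.expectation ?M
           (\<lambda>\<phi>. if psi_of E A \<phi> = \<psi> then f_psi (psi_of E (A \<union> {i}) \<phi>) - f_psi (psi_of E A \<phi>) else 0) =
          measure_pmf.expectation ?M (\<lambda>\<phi>. if \<phi> \<inter> F = L then Dv B i \<phi> else 0)"
    proof (rule exp_cong)
      fix \<phi> assume "\<phi> \<in> set_pmf ?M"
      then have \<phi>E: "\<phi> \<subseteq> E" using set_realization by blast
      then have fin: "finite \<phi>" using finE finite_subset by blast
      show "(if psi_of E A \<phi> = \<psi> then f_psi (psi_of E (A \<union> {i}) \<phi>) - f_psi (psi_of E A \<phi>) else 0) =
            (if \<phi> \<inter> F = L then Dv B i \<phi> else 0)"
      proof (cases "\<phi> \<inter> F = L")
        case True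
        have "f_psi (psi_of E (A1 \<union> {i}) \<phi>) - f_psi (psi_of E A1 \<phi>) = Dv B i \<phi>"
          unfolding f_psi_psi_of[OF \<phi>E] GB[OF \<phi>E True] using Gamma_add_card[OF GB[OF \<phi>E True] fin fA1] .
        then show ?thesis using iff[OF \<phi>E] True \<open>A = A1\<close> by simp
      next
        case False then show ?thesis using iff[OF \<phi>E] by simp
      qed
    qed
    also have "\<dots> = measure_pmf.expectation ?M (\<lambda>\<phi>. if \<phi> \<inter> F = L then 1 else 0) * measure_pmf.expectation ?M (Dv B i)"
      by (rule cyl_indep[OF finE]) (simp add: Dv_def F_def set_diff_eq)
    finally show ?thesis using True by simp
  qed
  have inner1: "measure_pmf.expectation ?M (\<lambda>\<phi>. if psi_of E A \<phi> = \<psi> then 1 else 0) =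
        (if A = A1 then measure_pmf.expectation ?M (\<lambda>\<phi>. if \<phi> \<inter> F = L then 1 else (0::real)) else 0)" for A
  proof (cases "A = A1")
    case False
    have "measure_pmf.expectation ?M (\<lambda>\<phi>. if psi_of E A \<phi> = \<psi> then 1 else (0::real)) = measure_pmf.expectation ?M (\<lambda>\<phi>. 0)" (is "measure_pmf.expectation _ ?l = measure_pmf.expectation _ ?r")
    proof (rule exp_cong)
      fix \<phi> assume "\<phi> \<in> set_pmf ?M"
      then have \<phi>E: "\<phi> \<subseteq> E" using set_realization by blast
      show "?l \<phi> = ?r \<phi>" using iff[OF \<phi>E] False by simp
    qed
    then show ?thesis using False by simp
  next
    case True
    have "measure_pmf.expectation ?M (\<lambda>\<phi>. if psi_of E A \<phi> = \<psi> then 1 else (0::real)) =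
          measure_pmf.expectation ?M (\<lambda>\<phi>. if \<phi> \<inter> F = L then 1 else 0)" (is "measure_pmf.expectation _ ?l = measure_pmf.expectation _ ?r")
    proof (rule exp_cong)
      fix \<phi> assume "\<phi> \<in> set_pmf ?M"
      then have \<phi>E: "\<phi> \<subseteq> E" using set_realization by blast
      show "?l \<phi> = ?r \<phi>" using iff[OF \<phi>E] True by simp
    qed
    then show ?thesis using True by simp
  qed
  show ?thesis unfolding inner inner1 B\<psi> by simp
qed

definition Kf :: "nat set \<Rightarrow> edge set \<Rightarrow> (edge \<Rightarrow> real) \<Rightarrow> (nat \<Rightarrow> real) \<Rightarrow> real \<Rightarrow> partial_real \<Rightarrow> nat set \<Rightarrow> real" where
  "Kf V E p x t \<psi> C = measure_pmf.expectation (signal_pmf V x t) (\<lambda>A. measure_pmf.expectation (realization_pmf E p)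
           (\<lambda>\<phi>. if psi_of E A \<phi> = \<psi> then f_psi (psi_of E (A \<union> C) \<phi>) - f_psi (psi_of E A \<phi>) else 0))"

definition P0f :: "nat set \<Rightarrow> edge set \<Rightarrow> (edge \<Rightarrow> real) \<Rightarrow> (nat \<Rightarrow> real) \<Rightarrow> real \<Rightarrow> partial_real \<Rightarrow> real" where
  "P0f V E p x t \<psi> = measure_pmf.expectation (signal_pmf V x t) (\<lambda>A. measure_pmf.expectation (realization_pmf E p)
           (\<lambda>\<phi>. if psi_of E A \<phi> = \<psi> then 1 else 0))"

lemma num_den:
  assumes finV: "finite V" and finE: "finite E" and \<psi>: "\<psi> = psi_of E A1 \<phi>1"
    and A1: "A1 \<in> set_pmf (signal_pmf V x t)" and \<phi>1: "\<phi>1 \<in> set_pmf (realization_pmf E p)"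
  shows "cond_increment V E p x t h \<psi> = measure_pmf.expectation (signal_pmf V x h) (Kf V E p x t \<psi>) / P0f V E p x t \<psi>"
    and "P0f V E p x t \<psi> > 0"
proof -
  let ?SA = "signal_pmf V x t" and ?SC = "signal_pmf V x h" and ?M = "realization_pmf E p"
  let ?P = "Psi_pair_law V E p x t h"
  let ?Ev = "{q :: partial_real \<times> partial_real. fst q = \<psi>}"
  let ?m = "\<lambda>((A, C), \<phi>). (psi_of E A \<phi>, psi_of E (A \<union> C) \<phi>)"
  have P: "?P = map_pmf ?m (pair_pmf (pair_pmf ?SA ?SC) ?M)" unfolding Psi_pair_law_def by simp
  have fSA: "finite (set_pmf ?SA)" and fSC: "finite (set_pmf ?SC)" and fM: "finite (set_pmf ?M)"
    using finV finE by (auto intro: finite_signal finite_realization)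
  have fSAC: "finite (set_pmf (pair_pmf ?SA ?SC))" using fSA fSC by simp
  have finP: "finite (set_pmf ?P)" unfolding P using fSAC fM by simp
  obtain C0 where C0: "C0 \<in> set_pmf ?SC" using set_pmf_not_empty[of ?SC] by blast
  have "((A1, C0), \<phi>1) \<in> set_pmf (pair_pmf (pair_pmf ?SA ?SC) ?M)" using A1 C0 \<phi>1 by simp
  then have "?m ((A1, C0), \<phi>1) \<in> set_pmf ?P" unfolding P set_map_pmf by (rule imageI)
  then have ne: "set_pmf ?P \<inter> ?Ev \<noteq> {}" using \<psi> by auto
  have gen: "measure_pmf.expectation ?P (\<lambda>q. if q \<in> ?Ev then g (fst q) (snd q) else 0) =
        measure_pmf.expectation ?SC (\<lambda>C. measure_pmf.expectation ?SA (\<lambda>A. measure_pmf.expectation ?M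
           (\<lambda>\<phi>. if psi_of E A \<phi> = \<psi> then g (psi_of E A \<phi>) (psi_of E (A \<union> C) \<phi>) else 0)))" for g :: "partial_real \<Rightarrow> partial_real \<Rightarrow> real"
  proof -
    have "measure_pmf.expectation ?P (\<lambda>q. if q \<in> ?Ev then g (fst q) (snd q) else 0) =
          measure_pmf.expectation (pair_pmf (pair_pmf ?SA ?SC) ?M)
            (\<lambda>z. if psi_of E (fst (fst z)) (snd z) = \<psi> then g (psi_of E (fst (fst z)) (snd z)) (psi_of E (fst (fst z) \<union> snd (fst z)) (snd z)) else 0)"
      unfolding P by (simp add: case_prod_unfold cong: if_cong)
    also have "\<dots> = measure_pmf.expectation (pair_pmf ?SA ?SC) (\<lambda>ac. measure_pmf.expectation ?M
            (\<lambda>\<phi>. if psi_of E (fst ac) \<phi> = \<psi> then g (psi_of E (fst ac) \<phi>) (psi_of E (fst ac \<union> snd ac) \<phi>) else 0))"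
      by (subst exp_pair[OF fSAC fM]) (simp cong: if_cong)
    also have "\<dots> = measure_pmf.expectation ?SC (\<lambda>C. measure_pmf.expectation ?SA (\<lambda>A. measure_pmf.expectation ?M
           (\<lambda>\<phi>. if psi_of E A \<phi> = \<psi> then g (psi_of E A \<phi>) (psi_of E (A \<union> C) \<phi>) else 0)))"
      by (subst exp_pair_swap[OF fSA fSC]) (simp cong: if_cong)
    finally show ?thesis .
  qed
  have num: "measure_pmf.expectation ?P (\<lambda>q. if q \<in> ?Ev then (case q of (a, b) \<Rightarrow> f_psi b - f_psi a) else 0) =
        measure_pmf.expectation ?SC (Kf V E p x t \<psi>)"
  proof -
    have e1: "(\<lambda>q. if q \<in> ?Ev then (case q of (a, b) \<Rightarrow> f_psi b - f_psi a) else 0) =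
              (\<lambda>q. if q \<in> ?Ev then (\<lambda>a b. f_psi b - f_psi a) (fst q) (snd q) else 0)"
      by (rule ext) (simp add: case_prod_unfold)
    note g1 = gen[of "\<lambda>a b. f_psi b - f_psi a"]
    show ?thesis unfolding e1 Kf_def by (rule g1)
  qed
  have den: "measure_pmf.prob ?P ?Ev = P0f V E p x t \<psi>"
  proof -
    have e1: "(\<lambda>q. if q \<in> ?Ev then 1 else 0) = (\<lambda>q. if q \<in> ?Ev then (\<lambda>a b. 1::real) (fst q) (snd q) else 0)"
      by simp
    have "measure_pmf.prob ?P ?Ev = measure_pmf.expectation ?P (\<lambda>q. if q \<in> ?Ev then 1 else 0)"
      by (rule prob_as_exp[OF finP])
    also have "\<dots> = measure_pmf.expectation ?SC (\<lambda>C. P0f V E p x t \<psi>)"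
      using gen[of "\<lambda>a b. 1"] unfolding P0f_def by simp
    also have "\<dots> = P0f V E p x t \<psi>" by simp
    finally show ?thesis .
  qed
  show "cond_increment V E p x t h \<psi> = measure_pmf.expectation ?SC (Kf V E p x t \<psi>) / P0f V E p x t \<psi>"
    unfolding cond_increment_def cond_exp[OF finP ne] num den ..
  obtain q where q: "q \<in> set_pmf ?P" "q \<in> ?Ev" using ne by blast
  have "measure_pmf.prob ?P ?Ev > 0" by (rule measure_pmf_posI[OF q])
  then show "P0f V E p x t \<psi> > 0" using den by simp
qed

lemma main_gen:
  fixes V :: "nat set" and E :: "edge set" and p :: "edge \<Rightarrow> real" and x :: "nat \<Rightarrow> real"
    and t :: real and \<psi> :: partial_real
  assumes finV: "finite V" and ig: "influence_graph V E p"
    and x01: "\<forall>i\<in>V. 0 \<le> x i \<and> x i \<le> 1"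
    and \<psi>in: "\<psi> \<in> set_pmf (Psi_law V E p x t)"
  shows "\<exists>L. ((\<lambda>h. cond_increment V E p x t h \<psi> / h) \<longlongrightarrow> L) (at_right 0)
             \<and> L \<ge> f_plus V E p x - sigma_set E p (Gamma_psi \<psi>)"
proof -
  let ?SA = "signal_pmf V x t" and ?M = "realization_pmf E p"
  have "E \<subseteq> V \<times> V" using ig unfolding influence_graph_def by blast
  then have finE: "finite E" using finV by (meson finite_SigmaI finite_subset)
  have "\<psi> \<in> (\<lambda>(A, \<phi>). psi_of E A \<phi>) ` (set_pmf ?SA \<times> set_pmf ?M)"
    using \<psi>in unfolding Psi_law_def by simp
  then obtain z where z: "z \<in> set_pmf ?SA \<times> set_pmf ?M" "\<psi> = (\<lambda>(A, \<phi>). psi_of E A \<phi>) z" by blast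
  obtain A1 \<phi>1 where z_eq: "z = (A1, \<phi>1)" by (cases z)
  have A1: "A1 \<in> set_pmf ?SA" and \<phi>1: "\<phi>1 \<in> set_pmf ?M" and \<psi>: "\<psi> = psi_of E A1 \<phi>1"
    using z unfolding z_eq by auto
  have \<phi>1E: "\<phi>1 \<subseteq> E" using \<phi>1 set_realization by blast
  have A1V: "A1 \<subseteq> V" using A1 set_signal by blast
  have fA1: "finite A1" using A1V finV finite_subset by blast
  define B where "B = Gamma_psi \<psi>"
  have B_eq: "B = Gamma A1 \<phi>1" unfolding B_def \<psi> by (rule Gamma_psi_psi_of[OF \<phi>1E])
  have finB: "finite B" unfolding B_eq using Gamma_finite[OF fA1] \<phi>1E finE finite_subset by blast
  define \<pi>0 where "\<pi>0 = P0f V E p x t \<psi>"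
  have \<pi>0pos: "\<pi>0 > 0" unfolding \<pi>0_def by (rule num_den(2)[OF finV finE \<psi> A1 \<phi>1])
  define K where "K = Kf V E p x t \<psi>"
  define \<Delta> where "\<Delta> i = measure_pmf.expectation ?M (Dv B i)" for i
  have K0: "K {} = 0" unfolding K_def Kf_def by (simp cong: if_cong)
  have K1: "K {i} = \<pi>0 * \<Delta> i" for i
    unfolding K_def Kf_def \<pi>0_def P0f_def \<Delta>_def B_def by (rule K_one[OF finE \<psi> \<phi>1E fA1])
  define S where "S h = (\<Sum>C\<in>Pow V. (\<Prod>j\<in>V. if j \<in> C then qf (x j) h else 1 - qf (x j) h) * K C)" for h
  have ci: "cond_increment V E p x t h \<psi> = S h / \<pi>0" if h: "h > 0" for h
  proof -
    have r: "\<forall>i\<in>V. 0 \<le> qf (x i) h \<and> qf (x i) h \<le> 1"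
    proof
      fix i assume "i \<in> V"
      then have "0 \<le> x i * h" using x01 h by simp
      then show "0 \<le> qf (x i) h \<and> qf (x i) h \<le> 1" unfolding qf_def by simp
    qed
    have sig: "signal_pmf V x h = map_pmf (\<lambda>b. {i\<in>V. b i}) (Pi_pmf V False (\<lambda>i. bernoulli_pmf (qf (x i) h)))"
      unfolding signal_pmf_def qf_def ..
    have "measure_pmf.expectation (signal_pmf V x h) K = (\<Sum>C\<in>Pow V. pmf (signal_pmf V x h) C * K C)"
      by (rule exp_sum) (use finV set_signal in auto)
    also have "\<dots> = S h" unfolding S_def sig
      by (intro sum.cong refl) (simp add: pmf_setPi[OF finV r])
    finally show ?thesis using num_den(1)[OF finV finE \<psi> A1 \<phi>1, of h] unfolding \<pi>0_def K_def by simp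
  qed
  have lim0: "((\<lambda>h. S h / h) \<longlongrightarrow> (\<Sum>i\<in>V. x i * K {i})) (at_right 0)"
    unfolding S_def by (rule sum_lim[where K=K, OF finV K0])
  have lim1: "((\<lambda>h. (S h / h) / \<pi>0) \<longlongrightarrow> (\<Sum>i\<in>V. x i * K {i}) / \<pi>0) (at_right 0)"
    by (rule tendsto_divide[OF lim0 tendsto_const]) (use \<pi>0pos in simp)
  have ev: "eventually (\<lambda>h. (S h / h) / \<pi>0 = cond_increment V E p x t h \<psi> / h) (at_right 0)"
    using eventually_at_right_less[of "0::real"] by eventually_elim (simp add: ci)
  have lim: "((\<lambda>h. cond_increment V E p x t h \<psi> / h) \<longlongrightarrow> (\<Sum>i\<in>V. x i * K {i}) / \<pi>0) (at_right 0)"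
    using tendsto_cong[OF ev] lim1 by simp
  have Lval: "(\<Sum>i\<in>V. x i * K {i}) / \<pi>0 = (\<Sum>i\<in>V. x i * \<Delta> i)"
    unfolding K1 sum_divide_distrib using \<pi>0pos by (intro sum.cong refl) simp
  have bound: "f_plus V E p x \<le> sigma_set E p B + (\<Sum>i\<in>V. x i * \<Delta> i)"
    unfolding f_plus_def
  proof (rule cSup_least)
    show "{sigma_policy V E p R | R. (\<forall>\<pi>\<in>set_pmf R. valid_policy V \<pi>) \<and> (\<forall>i\<in>V. sel_prob V E p R i = x i)} \<noteq> {}"
      using fplus_nonempty[OF finV x01, of E p] by blast
  next
    fix y assume "y \<in> {sigma_policy V E p R | R. (\<forall>\<pi>\<in>set_pmf R. valid_policy V \<pi>) \<and> (\<forall>i\<in>V. sel_prob V E p R i = x i)}"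
    then obtain R where y: "y = sigma_policy V E p R" and valid: "\<forall>\<pi>\<in>set_pmf R. valid_policy V \<pi>"
      and marg: "\<forall>i\<in>V. sel_prob V E p R i = x i" by blast
    have "y \<le> sigma_set E p B + (\<Sum>i\<in>V. sel_prob V E p R i * \<Delta> i)"
      unfolding y \<Delta>_def by (rule policy_bound[OF finE finV finB valid])
    also have "\<dots> = sigma_set E p B + (\<Sum>i\<in>V. x i * \<Delta> i)"
      using marg by simp
    finally show "y \<le> sigma_set E p B + (\<Sum>i\<in>V. x i * \<Delta> i)" .
  qed
  show ?thesis
  proof (intro exI conjI)
    show "((\<lambda>h. cond_increment V E p x t h \<psi> / h) \<longlongrightarrow> (\<Sum>i\<in>V. x i * K {i}) / \<pi>0) (at_right 0)" by (rule lim)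
    show "f_plus V E p x - sigma_set E p (Gamma_psi \<psi>) \<le> (\<Sum>i\<in>V. x i * K {i}) / \<pi>0"
      unfolding Lval using bound unfolding B_def by simp
  qed
qed

theorem lemma2:
  fixes n :: nat and E :: "edge set" and p :: "edge \<Rightarrow> real" and x :: "nat \<Rightarrow> real"
    and t :: real and \<psi> :: partial_real
  assumes "influence_graph {1..n} E p"
    and "\<forall>i\<in>{1..n}. 0 \<le> x i \<and> x i \<le> 1"
    and "0 \<le> t" and "t \<le> 1"
    and "\<psi> \<in> set_pmf (Psi_law {1..n} E p x t)"
  shows "\<exists>L. ((\<lambda>h. cond_increment {1..n} E p x t h \<psi> / h) \<longlongrightarrow> L) (at_right 0)
             \<and> L \<ge> f_plus {1..n} E p x - sigma_set E p (Gamma_psi \<psi>)"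
  by (rule main_gen[OF finite_atLeastAtMost assms(1,2,5)])

end
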